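(* Assume $-1\in\mathbb F^2$ and let $J=JCK(Z,\delta)$, $K=Z\oplus Zy$, and $\Phi:K\to\mathrm{Der}(J)^{[\bar1,\bar1]}$, $f+gy\mapsto D(v_1,fv_2)+\sqrt{-1}D(v_3,gy)$. For $\partial\in\mathrm{Der}(J)^{[\bar0,\bar0]}$, the bracket $[\partial,\Phi(z)]$ lies in $\Phi(K)$ for all $z\in K$ and $\Phi^*(\partial):z\mapsto\Phi^{-1}([\partial,\Phi(z)])$ is a derivation of $K$. The map $\Phi^*:\mathrm{Der}(J)^{[\bar0,\bar0]}\to\mathrm{Der}(K)$ is a Lie superalgebra isomorphism onto $\overline{\mathrm{Der}}(K)$, and it maps $\mathrm{Inder}(J)^{[\bar0,\bar0]}$ onto $\mathrm{Inder}(K)$. Hence $\mathrm{Der}(J)^{[\bar0,\bar0]}\cong\overline{\mathrm{Der}}(K)$ and $\mathrm{Inder}(J)^{[\bar0,\bar0]}\cong\mathrm{Inder}(K)$.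
   Context: Let $\mathbb F$ be a field of characteristic $\neq 2$ with $-1\in\mathbb F^2$, $Z$ a unital commutative associative $\mathbb F$-algebra, and $\delta$ a derivation of $Z$ such that $Z\delta(Z)=Z$ (the $\mathbb F$-span of all products $f\delta(g)$, $f,g\in Z$, is $Z$). The Cheng-Kac Jordan superalgebra $J=JCK(Z,\delta)=J_{\bar0}\oplus J_{\bar1}$ is defined as follows: $J_{\bar0}=Z1\oplus Zw_1\oplus Zw_2\oplus Zw_3$ and $J_{\bar1}=Zx\oplus Zx_1\oplus Zx_2\oplus Zx_3$ are free $Z$-modules of rank 4; $J_{\bar0}$ is the $Z$-algebra $(\mathbb F1\oplus\mathbb Fw_1\oplus\mathbb Fw_2\oplus\mathbb Fw_3)\otimes_{\mathbb F}Z$ with $1$ the identity, $w_1^2=w_2^2=1$, $w_3^2=-1$, $w_iw_j=0$ for $i\ne j$. For $f,g\in Z$ and $i,j\in\{1,2,3\}$ the remaining products are: $f(gx)=(fg)x$, $f(gx_j)=(fg)x_j$, $(fw_i)(gx)=(\delta(f)g)x_i$, $(fw_i)(gx_j)=-(fg)x_{i\times j}$, $(fx)(gx)=\delta(f)g-f\delta(g)$, $(fx)(gx_j)=-(fg)w_j$, $(fx_i)(gx)=(fg)w_i$, $(fx_i)(gx_j)=0$, extended by supercommutativity ($ab=(-1)^{|a||b|}ba$), where $x_{1\times2}=-x_{2\times1}=x_3$, $x_{1\times3}=-x_{3\times1}=x_2$, $x_{3\times2}=-x_{2\times3}=x_1$, $x_{i\times i}=0$. $J$ is $\mathbb Z_2^2$-graded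 by $J^{[\bar0,\bar0]}=Z\oplus Zx$, $J^{[\bar1,\bar0]}=Zw_1\oplus Zx_1$, $J^{[\bar0,\bar1]}=Zw_2\oplus Zx_2$, $J^{[\bar1,\bar1]}=Zw_3\oplus Zx_3$, and $\mathrm{Der}(J)^{\alpha}$ (resp. $\mathrm{Inder}(J)^\alpha$) denotes the (super) derivations (resp. inner derivations) mapping each $J^{\beta}$ into $J^{\alpha+\beta}$. $D(a,b)$ is $c\mapsto a(bc)-(-1)^{|a||b|}b(ac)$ and $\mathrm{Inder}$ is the span of all $D(a,b)$. Fix $\sqrt{-1}\in\mathbb F$ and set $v_1=\sqrt{-1}w_1$, $v_2=\sqrt{-1}w_2$, $v_3=w_3$, $y=x$. $K=Z\oplus Zy$ is a subalgebra of $J$. For $a\in Z$, $\eta_a$ is the odd derivation of $K$ with $\eta_a(Z)=0$, $\eta_a(y)=a$; $\overline{\mathrm{Der}}(K)$ is the subalgebra $\mathrm{Der}(K)_{\bar0}\oplus\{\eta_a:a\in Z\}$ of $\mathrm{Der}(K)$. *)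

theory Defs
  imports "HOL-Library.Function_Algebras" "HOL-Library.FuncSet"
begin

text \<open>The ground field F is a type 'f::field,
 the unital commutative associative F-algebra Z is a type 'z::comm_ring_1 together with the
 structure ring homomorphism iota : F -> Z (scalar multiplication c.z = iota c * z).
 Elements of J are coordinate functions basis => 'z w.r.t. the free Z-basis
 1, w1, w2, w3, x, x1, x2, x3.\<close>

datatype idx = I1 | I2 | I3
datatype basis = One | W idx | X0 | Xs idx

type_synonym 'z jel = "basis \<Rightarrow> 'z"

definition basis_set :: "basis set" where
  "basis_set = {One, W I1, W I2, W I3, X0, Xs I1, Xs I2, Xs I3}"

definition elem :: "basis \<Rightarrow> 'z::zero \<Rightarrow> 'z jel" where
  "elem b f = (\<lambda>i. if i = b then f else 0)"

fun wsq :: "idx \<Rightarrow> 'z::comm_ring_1" where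
  "wsq I1 = 1" | "wsq I2 = 1" | "wsq I3 = -1"

fun xcross :: "idx \<Rightarrow> idx \<Rightarrow> 'z::comm_ring_1 \<Rightarrow> 'z jel" where
  "xcross I1 I2 g = elem (Xs I3) g"
| "xcross I2 I1 g = elem (Xs I3) (- g)"
| "xcross I1 I3 g = elem (Xs I2) g"
| "xcross I3 I1 g = elem (Xs I2) (- g)"
| "xcross I3 I2 g = elem (Xs I1) g"
| "xcross I2 I3 g = elem (Xs I1) (- g)"
| "xcross _ _ g = 0"

fun bprod :: "('z::comm_ring_1 \<Rightarrow> 'z) \<Rightarrow> 'z \<Rightarrow> basis \<Rightarrow> 'z \<Rightarrow> basis \<Rightarrow> 'z jel" where
  "bprod \<delta> f One g b' = elem b' (f * g)"
| "bprod \<delta> f (W i) g One = elem (W i) (f * g)"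
| "bprod \<delta> f (W i) g (W j) = (if i = j then elem One (wsq i * (f * g)) else 0)"
| "bprod \<delta> f (W i) g X0 = elem (Xs i) (\<delta> f * g)"
| "bprod \<delta> f (W i) g (Xs j) = - xcross i j (f * g)"
| "bprod \<delta> f X0 g One = elem X0 (f * g)"
| "bprod \<delta> f X0 g (W i) = elem (Xs i) (\<delta> g * f)"
| "bprod \<delta> f X0 g X0 = elem One (\<delta> f * g - f * \<delta> g)"
| "bprod \<delta> f X0 g (Xs j) = elem (W j) (- (f * g))"
| "bprod \<delta> f (Xs i) g One = elem (Xs i) (f * g)"
| "bprod \<delta> f (Xs i) g (W j) = - xcross j i (f * g)"
| "bprod \<delta> f (Xs i) g X0 = elem (W i) (f * g)"
| "bprod \<delta> f (Xs i) g (Xs j) = 0"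

definition jmult :: "('z::comm_ring_1 \<Rightarrow> 'z) \<Rightarrow> 'z jel \<Rightarrow> 'z jel \<Rightarrow> 'z jel" where
  "jmult \<delta> a c = (\<Sum>b\<in>basis_set. \<Sum>b'\<in>basis_set. bprod \<delta> (a b) b (c b') b')"

fun odd_b :: "basis \<Rightarrow> bool" where
  "odd_b One = False" | "odd_b (W _) = False" | "odd_b X0 = True" | "odd_b (Xs _) = True"

definition Jpar :: "bool \<Rightarrow> ('z::zero) jel set" where
  "Jpar p = {a. \<forall>b. odd_b b \<noteq> p \<longrightarrow> a b = 0}"

definition P0 :: "('z::zero) jel \<Rightarrow> 'z jel" where
  "P0 a = (\<lambda>b. if odd_b b then 0 else a b)"
definition P1 :: "('z::zero) jel \<Rightarrow> 'z jel" where
  "P1 a = (\<lambda>b. if odd_b b then a b else 0)"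

definition ssign :: "bool \<Rightarrow> bool \<Rightarrow> 'z::comm_ring_1" where
  "ssign p q = (if p \<and> q then -1 else 1)"

definition zmul :: "'z::comm_ring_1 \<Rightarrow> 'z jel \<Rightarrow> 'z jel" where
  "zmul z a = (\<lambda>b. z * a b)"

definition scal :: "('f \<Rightarrow> 'z::comm_ring_1) \<Rightarrow> 'f \<Rightarrow> 'z jel \<Rightarrow> 'z jel" where
  "scal \<iota> k a = (\<lambda>b. \<iota> k * a b)"

fun deg :: "basis \<Rightarrow> bool \<times> bool" where
  "deg One = (False, False)" | "deg X0 = (False, False)"
| "deg (W I1) = (True, False)" | "deg (Xs I1) = (True, False)"
| "deg (W I2) = (False, True)" | "deg (Xs I2) = (False, True)"
| "deg (W I3) = (True, True)" | "deg (Xs I3) = (True, True)"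

definition Jdeg :: "bool \<times> bool \<Rightarrow> ('z::zero) jel set" where
  "Jdeg \<alpha> = {a. \<forall>b. deg b \<noteq> \<alpha> \<longrightarrow> a b = 0}"

definition gadd :: "bool \<times> bool \<Rightarrow> bool \<times> bool \<Rightarrow> bool \<times> bool" where
  "gadd \<alpha> \<beta> = (fst \<alpha> \<noteq> fst \<beta>, snd \<alpha> \<noteq> snd \<beta>)"

definition sder_on :: "('f \<Rightarrow> 'z::comm_ring_1) \<Rightarrow> ('z \<Rightarrow> 'z) \<Rightarrow> 'z jel set \<Rightarrow> bool
    \<Rightarrow> ('z jel \<Rightarrow> 'z jel) \<Rightarrow> bool" where
  "sder_on \<iota> \<delta> S p d \<longleftrightarrow>
     (\<forall>a\<in>S. \<forall>c\<in>S. d (a + c) = d a + d c) \<and>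
     (\<forall>k. \<forall>a\<in>S. d (scal \<iota> k a) = scal \<iota> k (d a)) \<and>
     (\<forall>q. \<forall>a\<in>S \<inter> Jpar q. d a \<in> S \<inter> Jpar (p \<noteq> q)) \<and>
     (\<forall>q r. \<forall>a\<in>S \<inter> Jpar q. \<forall>c\<in>S \<inter> Jpar r.
        d (jmult \<delta> a c) = jmult \<delta> (d a) c + zmul (ssign p q) (jmult \<delta> a (d c)))"

definition Der_on :: "('f \<Rightarrow> 'z::comm_ring_1) \<Rightarrow> ('z \<Rightarrow> 'z) \<Rightarrow> 'z jel set
    \<Rightarrow> ('z jel \<Rightarrow> 'z jel) set" where
  "Der_on \<iota> \<delta> S = {restrict (\<lambda>a. d0 a + d1 a) S | d0 d1.
      sder_on \<iota> \<delta> S False d0 \<and> sder_on \<iota> \<delta> S True d1}"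

definition ev_map :: "('z::comm_monoid_add jel \<Rightarrow> 'z jel) \<Rightarrow> 'z jel \<Rightarrow> 'z jel" where
  "ev_map D = (\<lambda>a. P0 (D (P0 a)) + P1 (D (P1 a)))"
definition od_map :: "('z::comm_monoid_add jel \<Rightarrow> 'z jel) \<Rightarrow> 'z jel \<Rightarrow> 'z jel" where
  "od_map D = (\<lambda>a. P1 (D (P0 a)) + P0 (D (P1 a)))"

definition sbr :: "('z::comm_ring_1 jel \<Rightarrow> 'z jel) \<Rightarrow> ('z jel \<Rightarrow> 'z jel) \<Rightarrow> 'z jel \<Rightarrow> 'z jel" where
  "sbr D E = (\<lambda>a.
      ev_map D (ev_map E a) - ev_map E (ev_map D a)
    + ev_map D (od_map E a) - od_map E (ev_map D a)
    + od_map D (ev_map E a) - ev_map E (od_map D a)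
    + od_map D (od_map E a) + od_map E (od_map D a))"

definition Dop :: "('z::comm_ring_1 \<Rightarrow> 'z) \<Rightarrow> bool \<Rightarrow> bool \<Rightarrow> 'z jel \<Rightarrow> 'z jel \<Rightarrow> 'z jel \<Rightarrow> 'z jel" where
  "Dop \<delta> p q a b = (\<lambda>c. jmult \<delta> a (jmult \<delta> b c) - zmul (ssign p q) (jmult \<delta> b (jmult \<delta> a c)))"

definition Fspan :: "('f \<Rightarrow> 'z::comm_ring_1) \<Rightarrow> 'z jel set \<Rightarrow> ('z jel \<Rightarrow> 'z jel) set
    \<Rightarrow> ('z jel \<Rightarrow> 'z jel) set" where
  "Fspan \<iota> S X = {restrict (\<lambda>a. \<Sum>i<n. scal \<iota> (c i) (Ds i a)) S | (n::nat) c Ds. \<forall>i<n. Ds i \<in> X}"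

definition InderJ :: "('f \<Rightarrow> 'z::comm_ring_1) \<Rightarrow> ('z \<Rightarrow> 'z) \<Rightarrow> ('z jel \<Rightarrow> 'z jel) set" where
  "InderJ \<iota> \<delta> = Fspan \<iota> UNIV {Dop \<delta> p q a b | p q a b. a \<in> Jpar p \<and> b \<in> Jpar q}"

definition deg_map :: "bool \<times> bool \<Rightarrow> ('z::zero jel \<Rightarrow> 'z jel) \<Rightarrow> bool" where
  "deg_map \<alpha> D \<longleftrightarrow> (\<forall>\<beta>. \<forall>a\<in>Jdeg \<beta>. D a \<in> Jdeg (gadd \<alpha> \<beta>))"

definition DerJ_deg :: "('f \<Rightarrow> 'z::comm_ring_1) \<Rightarrow> ('z \<Rightarrow> 'z) \<Rightarrow> bool \<times> bool \<Rightarrow> ('z jel \<Rightarrow> 'z jel) set" where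
  "DerJ_deg \<iota> \<delta> \<alpha> = {D \<in> Der_on \<iota> \<delta> UNIV. deg_map \<alpha> D}"

definition InderJ_deg :: "('f \<Rightarrow> 'z::comm_ring_1) \<Rightarrow> ('z \<Rightarrow> 'z) \<Rightarrow> bool \<times> bool \<Rightarrow> ('z jel \<Rightarrow> 'z jel) set" where
  "InderJ_deg \<iota> \<delta> \<alpha> = {D \<in> InderJ \<iota> \<delta>. deg_map \<alpha> D}"

text \<open>K = Z + Zy, y = x\<close>
definition Kset :: "('z::zero) jel set" where
  "Kset = {a. \<forall>b. b \<noteq> One \<and> b \<noteq> X0 \<longrightarrow> a b = 0}"

definition InderK :: "('f \<Rightarrow> 'z::comm_ring_1) \<Rightarrow> ('z \<Rightarrow> 'z) \<Rightarrow> ('z jel \<Rightarrow> 'z jel) set" where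
  "InderK \<iota> \<delta> = Fspan \<iota> Kset
     {restrict (Dop \<delta> p q a b) Kset | p q a b. a \<in> Kset \<inter> Jpar p \<and> b \<in> Kset \<inter> Jpar q}"

text \<open>eta_a: odd derivation of K with eta_a(Z)=0, eta_a(y)=a, i.e. f + g y maps to g a\<close>
definition eta :: "'z::comm_ring_1 \<Rightarrow> 'z jel \<Rightarrow> 'z jel" where
  "eta a = restrict (\<lambda>z. elem One (z X0 * a)) Kset"

definition DerbarK :: "('f \<Rightarrow> 'z::comm_ring_1) \<Rightarrow> ('z \<Rightarrow> 'z) \<Rightarrow> ('z jel \<Rightarrow> 'z jel) set" where
  "DerbarK \<iota> \<delta> = {restrict (\<lambda>z. d0 z + eta a z) Kset | d0 a. sder_on \<iota> \<delta> Kset False d0}"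

text \<open>v1 = s w1, v2 = s w2, v3 = w3 with s = sqrt(-1); Phi(f + g y) = D(v1, f v2) + s D(v3, g y)\<close>
definition Phi :: "('f \<Rightarrow> 'z::comm_ring_1) \<Rightarrow> ('z \<Rightarrow> 'z) \<Rightarrow> 'f \<Rightarrow> 'z jel \<Rightarrow> 'z jel \<Rightarrow> 'z jel" where
  "Phi \<iota> \<delta> s z = (\<lambda>c.
      Dop \<delta> False False (elem (W I1) (\<iota> s)) (elem (W I2) (z One * \<iota> s)) c
    + scal \<iota> s (Dop \<delta> False True (elem (W I3) 1) (elem X0 (z X0)) c))"

definition PhiStar :: "('f \<Rightarrow> 'z::comm_ring_1) \<Rightarrow> ('z \<Rightarrow> 'z) \<Rightarrow> 'f \<Rightarrow> ('z jel \<Rightarrow> 'z jel)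
    \<Rightarrow> 'z jel \<Rightarrow> 'z jel" where
  "PhiStar \<iota> \<delta> s D = restrict (\<lambda>z. the_inv_into Kset (Phi \<iota> \<delta> s) (sbr D (Phi \<iota> \<delta> s z))) Kset"

end

theory Submission
  imports Defs
begin

lemma elem_app[simp]: "elem b f b' = (if b' = b then f else 0)" by (simp add: elem_def)

lemma jm_One[simp]: "jmult \<delta> a c One = a One * c One + a (W I1) * c (W I1) + a (W I2) * c (W I2)
   - a (W I3) * c (W I3) + (\<delta> (a X0) * c X0 - a X0 * \<delta> (c X0))"
  by (simp add: jmult_def basis_set_def algebra_simps)
lemma jm_X0[simp]: "jmult \<delta> a c X0 = a One * c X0 + a X0 * c One"
  by (simp add: jmult_def basis_set_def algebra_simps)
lemma jm_W1[simp]: "jmult \<delta> a c (W I1) = a One * c (W I1) + a (W I1) * c One - a X0 * c (Xs I1) + a (Xs I1) * c X0"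
  by (simp add: jmult_def basis_set_def algebra_simps)
lemma jm_W2[simp]: "jmult \<delta> a c (W I2) = a One * c (W I2) + a (W I2) * c One - a X0 * c (Xs I2) + a (Xs I2) * c X0"
  by (simp add: jmult_def basis_set_def algebra_simps)
lemma jm_W3[simp]: "jmult \<delta> a c (W I3) = a One * c (W I3) + a (W I3) * c One - a X0 * c (Xs I3) + a (Xs I3) * c X0"
  by (simp add: jmult_def basis_set_def algebra_simps)
lemma jm_X1[simp]: "jmult \<delta> a c (Xs I1) = a One * c (Xs I1) + a (Xs I1) * c One + \<delta> (a (W I1)) * c X0 + \<delta> (c (W I1)) * a X0
   - a (W I3) * c (Xs I2) + a (W I2) * c (Xs I3) - a (Xs I2) * c (W I3) + a (Xs I3) * c (W I2)"
  by (simp add: jmult_def basis_set_def algebra_simps)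
lemma jm_X2[simp]: "jmult \<delta> a c (Xs I2) = a One * c (Xs I2) + a (Xs I2) * c One + \<delta> (a (W I2)) * c X0 + \<delta> (c (W I2)) * a X0
   - a (W I1) * c (Xs I3) + a (W I3) * c (Xs I1) - a (Xs I3) * c (W I1) + a (Xs I1) * c (W I3)"
  by (simp add: jmult_def basis_set_def algebra_simps)
lemma jm_X3[simp]: "jmult \<delta> a c (Xs I3) = a One * c (Xs I3) + a (Xs I3) * c One + \<delta> (a (W I3)) * c X0 + \<delta> (c (W I3)) * a X0
   - a (W I1) * c (Xs I2) + a (W I2) * c (Xs I1) - a (Xs I2) * c (W I1) + a (Xs I1) * c (W I2)"
  by (simp add: jmult_def basis_set_def algebra_simps)

lemma jm_W: "jmult \<delta> a c (W i) = a One * c (W i) + a (W i) * c One - a X0 * c (Xs i) + a (Xs i) * c X0"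
  by (cases i) simp_all

locale ck =
  fixes \<iota> :: "'f::field \<Rightarrow> 'z::comm_ring_1" and \<delta> :: "'z \<Rightarrow> 'z" and s :: 'f
  assumes char: "(2::'f) \<noteq> 0"
    and hom1: "\<iota> 1 = 1"
    and hom_add: "\<forall>a b. \<iota> (a + b) = \<iota> a + \<iota> b"
    and hom_mult: "\<forall>a b. \<iota> (a * b) = \<iota> a * \<iota> b"
    and der_add: "\<forall>f g. \<delta> (f + g) = \<delta> f + \<delta> g"
    and der_lin: "\<forall>c f. \<delta> (\<iota> c * f) = \<iota> c * \<delta> f"
    and der_mult: "\<forall>f g. \<delta> (f * g) = \<delta> f * g + f * \<delta> g"
    and span: "\<forall>z. \<exists>(n::nat) c fs gs. z = (\<Sum>i<n. \<iota> (c i) * fs i * \<delta> (gs i))"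
    and sqrt: "s * s = -1"
begin

lemma dadd[simp]: "\<delta> (f + g) = \<delta> f + \<delta> g" using der_add by blast
lemma dmult[simp]: "\<delta> (f * g) = \<delta> f * g + f * \<delta> g" using der_mult by blast
lemma dlin[simp]: "\<delta> (\<iota> c * f) = \<iota> c * \<delta> f" using der_lin by blast
lemma d0[simp]: "\<delta> 0 = 0" using dadd[of 0 0] by simp
lemma d1[simp]: "\<delta> 1 = 0" using dmult[of 1 1] by simp
lemma dneg[simp]: "\<delta> (- f) = - \<delta> f" using dadd[of "-f" f] by (simp add: add_eq_0_iff2)
lemma ddiff[simp]: "\<delta> (f - g) = \<delta> f - \<delta> g" using dadd[of f "-g"] by simp
lemma dnum[simp]: "\<delta> (numeral n) = 0"
proof (induction n)
  case One then show ?case by simp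
next
  case (Bit0 n) then show ?case using dadd[of "numeral n" "numeral n"] by (simp add: numeral_Bit0)
next
  case (Bit1 n) then show ?case using dadd[of "numeral n" "numeral n"] dadd[of "numeral n + numeral n" 1] by (simp add: numeral_Bit1)
qed
lemma iadd[simp]: "\<iota> (a + b) = \<iota> a + \<iota> b" using hom_add by blast
lemma imult[simp]: "\<iota> (a * b) = \<iota> a * \<iota> b" using hom_mult by blast
lemma i1[simp]: "\<iota> 1 = 1" using hom1 .
lemma i0[simp]: "\<iota> 0 = 0" using iadd[of 0 0] by simp
lemma ineg[simp]: "\<iota> (- a) = - \<iota> a" using iadd[of "-a" a] by (simp add: add_eq_0_iff2)
lemma dconst[simp]: "\<delta> (\<iota> k) = 0" using dlin[of k 1] by simp
lemma ss[simp]: "\<iota> s * \<iota> s = -1" using imult[of s s] sqrt by simp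
lemma ss2[simp]: "\<iota> s * (\<iota> s * x) = - x" by (simp flip: mult.assoc)

definition hf :: 'z where "hf = \<iota> (inverse 2)"
lemma hf2[simp]: "2 * hf = 1"
proof -
  have "(2::'f) * inverse 2 = 1" using char by simp
  then have "\<iota> 2 * \<iota> (inverse 2) = 1" by (metis imult i1)
  moreover have "\<iota> 2 = 2" using iadd[of 1 1] by simp
  ultimately show ?thesis unfolding hf_def by simp
qed
lemma two_cancel: "2 * (x::'z) = 0 \<Longrightarrow> x = 0"
proof -
  assume "2 * x = 0"
  then have "hf * (2 * x) = 0" by simp
  then show ?thesis by (simp flip: mult.assoc) (metis hf2 mult.commute mult_1)
qed

lemma span_zero: assumes "\<And>g. x * \<delta> g = 0" shows "x = 0"
proof -
  obtain n c fs gs where e: "(1::'z) = (\<Sum>i<(n::nat). \<iota> (c i) * fs i * \<delta> (gs i))" using span by blast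
  have "x = x * (\<Sum>i<n. \<iota> (c i) * fs i * \<delta> (gs i))" using e by simp
  also have "\<dots> = (\<Sum>i<n. \<iota> (c i) * fs i * (x * \<delta> (gs i)))" unfolding sum_distrib_left
    by (rule sum.cong) (simp_all add: algebra_simps)
  also have "\<dots> = 0" using assms by simp
  finally show ?thesis .
qed

definition good :: "('z \<Rightarrow> 'z) \<Rightarrow> 'z \<Rightarrow> bool" where
  "good D h \<longleftrightarrow> (\<forall>x y. D (x + y) = D x + D y) \<and> (\<forall>k x. D (\<iota> k * x) = \<iota> k * D x)
     \<and> (\<forall>x y. D (x * y) = D x * y + x * D y) \<and> (\<forall>x. D (\<delta> x) = \<delta> (D x) + 2 * h * \<delta> x)"

lemma goodD:
  assumes "good D h"
  shows "D (x + y) = D x + D y" "D (\<iota> k * x) = \<iota> k * D x" "D (x * y) = D x * y + x * D y"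
    "D (\<delta> x) = \<delta> (D x) + 2 * h * \<delta> x" "D 0 = 0" "D (- x) = - D x" "D (x - y) = D x - D y" "D 1 = 0"
proof -
  have a: "\<And>x y. D (x + y) = D x + D y" and m: "\<And>x y. D (x * y) = D x * y + x * D y"
    using assms unfolding good_def by blast+
  show "D (x + y) = D x + D y" "D (x * y) = D x * y + x * D y" using a m by blast+
  show "D (\<iota> k * x) = \<iota> k * D x" "D (\<delta> x) = \<delta> (D x) + 2 * h * \<delta> x"
    using assms unfolding good_def by blast+
  have "D (0 + 0) = D 0 + D 0" by (rule a)
  then have z: "D 0 = 0" by simp
  then show "D 0 = 0" .
  have n: "\<And>x. D (- x) = - D x"
  proof -
    fix x
    have "D (- x + x) = D (- x) + D x" by (rule a)
    then show "D (- x) = - D x" using z by (simp add: add_eq_0_iff2)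
  qed
  then show "D (- x) = - D x" .
  have "D (x + - y) = D x + D (- y)" by (rule a)
  then show "D (x - y) = D x - D y" using n by simp
  have "D (1 * 1) = D 1 * 1 + 1 * D 1" by (rule m)
  then show "D 1 = 0" by simp
qed

definition dJ0 :: "('z \<Rightarrow> 'z) \<Rightarrow> 'z \<Rightarrow> 'z jel \<Rightarrow> 'z jel" where
  "dJ0 D h a = (\<lambda>b. case b of One \<Rightarrow> D (a One) | W i \<Rightarrow> D (a (W i)) | X0 \<Rightarrow> D (a X0) + h * a X0
     | Xs i \<Rightarrow> D (a (Xs i)) - h * a (Xs i))"
definition dJ1 :: "'z \<Rightarrow> 'z jel \<Rightarrow> 'z jel" where
  "dJ1 c a = (\<lambda>b. case b of One \<Rightarrow> a X0 * c | W i \<Rightarrow> 0 | X0 \<Rightarrow> 0 | Xs i \<Rightarrow> - (a (W i) * c))"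
definition PA :: "'z \<Rightarrow> 'z jel \<Rightarrow> 'z jel" where
  "PA f a = (\<lambda>b. case b of One \<Rightarrow> 0 | W i \<Rightarrow> (case i of I1 \<Rightarrow> - (f * a (W I2)) | I2 \<Rightarrow> f * a (W I1) | I3 \<Rightarrow> 0)
     | X0 \<Rightarrow> 0 | Xs i \<Rightarrow> (case i of I1 \<Rightarrow> - (f * a (Xs I2)) | I2 \<Rightarrow> f * a (Xs I1) | I3 \<Rightarrow> \<delta> f * a X0))"
definition PB :: "'z \<Rightarrow> 'z jel \<Rightarrow> 'z jel" where
  "PB g a = (\<lambda>b. case b of One \<Rightarrow> g * a (Xs I3)
     | W i \<Rightarrow> (case i of I1 \<Rightarrow> - (g * a (Xs I2)) | I2 \<Rightarrow> g * a (Xs I1) | I3 \<Rightarrow> \<delta> g * a X0 - g * \<delta> (a X0))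
     | X0 \<Rightarrow> g * a (W I3)
     | Xs i \<Rightarrow> (case i of I1 \<Rightarrow> - (\<delta> (a (W I2)) * g) | I2 \<Rightarrow> \<delta> (a (W I1)) * g | I3 \<Rightarrow> - (\<delta> (a One) * g)))"

lemma Phi_pt: "Phi \<iota> \<delta> s z c b = PA (z One) c b + \<iota> s * PB (z X0) c b"
proof (cases b)
  case One then show ?thesis by (simp add: Phi_def Dop_def scal_def zmul_def ssign_def PA_def PB_def algebra_simps)
next
  case (W i) then show ?thesis by (cases i) (simp_all add: Phi_def Dop_def scal_def zmul_def ssign_def PA_def PB_def algebra_simps)
next
  case X0 then show ?thesis by (simp add: Phi_def Dop_def scal_def zmul_def ssign_def PA_def PB_def algebra_simps)
next
  case (Xs i) then show ?thesis by (cases i) (simp_all add: Phi_def Dop_def scal_def zmul_def ssign_def PA_def PB_def algebra_simps)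
qed

end


lemma JparF: "a \<in> Jpar False \<Longrightarrow> a X0 = 0 \<and> a (Xs i) = 0" by (simp add: Jpar_def)
lemma JparT: "a \<in> Jpar True \<Longrightarrow> a One = 0 \<and> a (W i) = 0" by (simp add: Jpar_def)
lemma JparI: "(\<And>b. odd_b b \<noteq> p \<Longrightarrow> a b = 0) \<Longrightarrow> a \<in> Jpar p" by (simp add: Jpar_def)
lemma restrict_UNIV': "restrict f UNIV = f" by (simp add: restrict_def)

lemma basis_cases: "P b" if "P One" "P (W I1)" "P (W I2)" "P (W I3)" "P X0" "P (Xs I1)" "P (Xs I2)" "P (Xs I3)"
proof (cases b)
  case (W i) then show ?thesis using that by (cases i) auto
next
  case (Xs i) then show ?thesis using that by (cases i) auto
qed (use that in auto)

lemma jel_eqI: "f One = g One \<Longrightarrow> f (W I1) = g (W I1) \<Longrightarrow> f (W I2) = g (W I2) \<Longrightarrow> f (W I3) = g (W I3)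
  \<Longrightarrow> f X0 = g X0 \<Longrightarrow> f (Xs I1) = g (Xs I1) \<Longrightarrow> f (Xs I2) = g (Xs I2) \<Longrightarrow> f (Xs I3) = g (Xs I3)
  \<Longrightarrow> f = (g :: 'z jel)"
  by (rule ext, rule_tac b=x in basis_cases) auto

context ck begin

lemma jm_scalL: "jmult \<delta> (scal \<iota> k a) c = scal \<iota> k (jmult \<delta> a c)"
  by (rule jel_eqI) (simp_all add: scal_def algebra_simps)
lemma jm_scalR: "jmult \<delta> a (scal \<iota> k c) = scal \<iota> k (jmult \<delta> a c)"
  by (rule jel_eqI) (simp_all add: scal_def algebra_simps)

lemma dJ0_leib: assumes g: "good D h"
  shows "dJ0 D h (jmult \<delta> a c) = jmult \<delta> (dJ0 D h a) c + jmult \<delta> a (dJ0 D h c)"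
  by (rule jel_eqI) (simp_all add: dJ0_def goodD[OF g] algebra_simps)

lemma zm1[simp]: "zmul 1 a = a" by (simp add: zmul_def)
lemma ssF[simp]: "ssign False q = 1" by (simp add: ssign_def)
lemma ssTF[simp]: "ssign True False = 1" by (simp add: ssign_def)
lemma ssTT[simp]: "ssign True True = -1" by (simp add: ssign_def)

lemma dJ1_leib: assumes "a \<in> Jpar q"
  shows "dJ1 c (jmult \<delta> a a') = jmult \<delta> (dJ1 c a) a' + zmul (ssign True q) (jmult \<delta> a (dJ1 c a'))"
proof (cases q)
  case True
  then have z: "a One = 0" "\<And>i. a (W i) = 0" using assms True JparT by auto
  show ?thesis using True by (intro jel_eqI) (simp_all add: z dJ1_def zmul_def algebra_simps)
next
  case False
  then have z: "a X0 = 0" "\<And>i. a (Xs i) = 0" using assms False JparF by auto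
  show ?thesis using False by (intro jel_eqI) (simp_all add: z dJ1_def zmul_def algebra_simps)
qed

lemma PA_leib: "PA f (jmult \<delta> a c) = jmult \<delta> (PA f a) c + jmult \<delta> a (PA f c)"
  by (rule jel_eqI) (simp_all add: PA_def algebra_simps)

lemma PB_leib: assumes "a \<in> Jpar q"
  shows "PB g (jmult \<delta> a a') = jmult \<delta> (PB g a) a' + zmul (ssign True q) (jmult \<delta> a (PB g a'))"
proof (cases q)
  case True
  then have z: "a One = 0" "\<And>i. a (W i) = 0" using assms True JparT by auto
  show ?thesis using True by (intro jel_eqI) (simp_all add: z PB_def zmul_def algebra_simps)
next
  case False
  then have z: "a X0 = 0" "\<And>i. a (Xs i) = 0" using assms False JparF by auto
  show ?thesis using False by (intro jel_eqI) (simp_all add: z PB_def zmul_def algebra_simps)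
qed

lemma JparE2: assumes "a \<in> Jpar q"
  obtains "q" "a One = 0" "\<And>i. a (W i) = 0" | "\<not> q" "a X0 = 0" "\<And>i. a (Xs i) = 0"
  using assms JparT JparF by (cases q) auto
lemma JparI_T: "a One = 0 \<Longrightarrow> a (W I1) = 0 \<Longrightarrow> a (W I2) = 0 \<Longrightarrow> a (W I3) = 0 \<Longrightarrow> a \<in> Jpar True"
  unfolding Jpar_def by (auto, case_tac b, auto, case_tac x2, auto)
lemma JparI_F: "a X0 = 0 \<Longrightarrow> a (Xs I1) = 0 \<Longrightarrow> a (Xs I2) = 0 \<Longrightarrow> a (Xs I3) = 0 \<Longrightarrow> a \<in> Jpar False"
  unfolding Jpar_def by (auto, case_tac b, auto, case_tac x4, auto)

lemma sderI: assumes "\<And>x y. d (x + y) = d x + d y" "\<And>k x. d (scal \<iota> k x) = scal \<iota> k (d x)"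
  "\<And>q x. x \<in> Jpar q \<Longrightarrow> d x \<in> Jpar (p \<noteq> q)"
  "\<And>q x y. x \<in> Jpar q \<Longrightarrow> d (jmult \<delta> x y) = jmult \<delta> (d x) y + zmul (ssign p q) (jmult \<delta> x (d y))"
  shows "sder_on \<iota> \<delta> UNIV p d"
  using assms unfolding sder_on_def by auto

lemma sderK: assumes "sder_on \<iota> \<delta> UNIV p d" "\<And>x. x \<in> Kset \<Longrightarrow> d x \<in> Kset"
  shows "sder_on \<iota> \<delta> Kset p d"
  using assms unfolding sder_on_def by auto

lemma good_const: "good D h \<Longrightarrow> D (\<iota> k) = 0"
proof -
  assume g: "good D h"
  have "D (\<iota> k * 1) = \<iota> k * D 1" by (rule goodD(2)[OF g])
  then show ?thesis by (simp add: goodD(8)[OF g])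
qed

lemma sder_dJ0: assumes g: "good D h" shows "sder_on \<iota> \<delta> UNIV False (dJ0 D h)"
proof (rule sderI)
  fix q and x :: "'z jel" assume "x \<in> Jpar q"
  then show "dJ0 D h x \<in> Jpar (False \<noteq> q)"
    by (rule JparE2) (auto intro!: JparI_T JparI_F simp: dJ0_def goodD[OF g])
qed (auto intro!: jel_eqI simp: dJ0_def goodD[OF g] good_const[OF g] scal_def dJ0_leib[OF g] algebra_simps)

lemma sder_dJ1: "sder_on \<iota> \<delta> UNIV True (dJ1 c)"
proof (rule sderI)
  fix q and x :: "'z jel" assume "x \<in> Jpar q"
  then show "dJ1 c x \<in> Jpar (True \<noteq> q)"
    by (rule JparE2) (auto intro!: JparI_T JparI_F simp: dJ1_def)
next
  fix q and x y :: "'z jel" assume "x \<in> Jpar q"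
  then show "dJ1 c (jmult \<delta> x y) = jmult \<delta> (dJ1 c x) y + zmul (ssign True q) (jmult \<delta> x (dJ1 c y))"
    by (rule dJ1_leib)
qed (auto intro!: jel_eqI simp: dJ1_def scal_def dJ1_leib algebra_simps)

lemma sder_PA: "sder_on \<iota> \<delta> UNIV False (PA f)"
proof (rule sderI)
  fix q and x :: "'z jel" assume "x \<in> Jpar q"
  then show "PA f x \<in> Jpar (False \<noteq> q)"
    by (rule JparE2) (auto intro!: JparI_T JparI_F simp: PA_def)
qed (auto intro!: jel_eqI simp: PA_def scal_def PA_leib algebra_simps)

lemma scal_zmul: "scal \<iota> k (x + zmul c y) = scal \<iota> k x + zmul c (scal \<iota> k y)"
  by (rule ext) (simp add: scal_def zmul_def algebra_simps)

lemma sder_PBs: "sder_on \<iota> \<delta> UNIV True (\<lambda>a. scal \<iota> s (PB g a))"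
proof (rule sderI)
  fix q and x :: "'z jel" assume "x \<in> Jpar q"
  then show "scal \<iota> s (PB g x) \<in> Jpar (True \<noteq> q)"
    by (rule JparE2) (auto intro!: JparI_T JparI_F simp: PB_def scal_def)
next
  fix q and x y :: "'z jel" assume "x \<in> Jpar q"
  then show "scal \<iota> s (PB g (jmult \<delta> x y)) = jmult \<delta> (scal \<iota> s (PB g x)) y + zmul (ssign True q) (jmult \<delta> x (scal \<iota> s (PB g y)))"
    by (simp add: PB_leib jm_scalL jm_scalR scal_zmul)
qed (auto intro!: jel_eqI simp: PB_def scal_def algebra_simps)

lemma dJ0_K: "x \<in> Kset \<Longrightarrow> good D h \<Longrightarrow> dJ0 D h x \<in> Kset"
  unfolding Kset_def dJ0_def by (auto split: basis.split simp: goodD)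
lemma dJ1_K: "x \<in> Kset \<Longrightarrow> dJ1 c x \<in> Kset"
  unfolding Kset_def dJ1_def by (auto split: basis.split)

end


lemma Jdeg_E: "a \<in> Jdeg \<beta> \<Longrightarrow> deg b \<noteq> \<beta> \<Longrightarrow> a b = 0" by (simp add: Jdeg_def)
lemma Kset_E: "z \<in> Kset \<Longrightarrow> z (W i) = 0 \<and> z (Xs i) = 0" by (simp add: Kset_def)

context ck begin

lemma Phi_fun: "Phi \<iota> \<delta> s z = (\<lambda>a. PA (z One) a + scal \<iota> s (PB (z X0) a))"
  by (intro ext) (simp add: Phi_pt scal_def)

lemma Phi_deg: "deg_map (True, True) (Phi \<iota> \<delta> s z)"
  unfolding deg_map_def
proof (intro allI ballI)
  fix \<beta> and a :: "'z jel" assume a: "a \<in> Jdeg \<beta>"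
  obtain p1 p2 where b: "\<beta> = (p1, p2)" by (cases \<beta>)
  have z: "\<And>b. deg b \<noteq> (p1, p2) \<Longrightarrow> a b = 0" using Jdeg_E[OF a] b by blast
  show "Phi \<iota> \<delta> s z a \<in> Jdeg (gadd (True, True) \<beta>)"
    unfolding b Jdeg_def gadd_def
    by (cases p1; cases p2; intro CollectI allI; rule_tac b=b in basis_cases;
        simp add: Phi_pt PA_def PB_def z)
qed

lemma Phi_Der: "Phi \<iota> \<delta> s z \<in> DerJ_deg \<iota> \<delta> (True, True)"
proof -
  have "Phi \<iota> \<delta> s z \<in> Der_on \<iota> \<delta> UNIV"
    unfolding Der_on_def
    by (rule CollectI, rule exI[of _ "PA (z One)"], rule exI[of _ "\<lambda>a. scal \<iota> s (PB (z X0) a)"])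
      (simp add: Phi_fun restrict_UNIV' sder_PA sder_PBs)
  then show ?thesis unfolding DerJ_deg_def using Phi_deg by simp
qed

lemma Phi_inj: "inj_on (Phi \<iota> \<delta> s) Kset"
proof (rule inj_onI)
  fix z1 z2 :: "'z jel" assume z1: "z1 \<in> Kset" and z2: "z2 \<in> Kset" and e: "Phi \<iota> \<delta> s z1 = Phi \<iota> \<delta> s z2"
  have "Phi \<iota> \<delta> s z1 (elem (W I1) 1) (W I2) = Phi \<iota> \<delta> s z2 (elem (W I1) 1) (W I2)" using e by simp
  then have o: "z1 One = z2 One" by (simp add: Phi_pt PA_def PB_def)
  have "Phi \<iota> \<delta> s z1 (elem (Xs I3) 1) One = Phi \<iota> \<delta> s z2 (elem (Xs I3) 1) One" using e by simp
  then have "\<iota> s * z1 X0 = \<iota> s * z2 X0" by (simp add: Phi_pt PA_def PB_def)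
  then have "\<iota> s * (\<iota> s * z1 X0) = \<iota> s * (\<iota> s * z2 X0)" by simp
  then have x: "z1 X0 = z2 X0" by simp
  show "z1 = z2" using o x Kset_E[OF z1] Kset_E[OF z2] by (intro jel_eqI) auto
qed

lemma ev_dJ: "good D h \<Longrightarrow> ev_map (\<lambda>a. dJ0 D h a + dJ1 c a) = dJ0 D h"
  by (intro ext jel_eqI) (simp_all add: ev_map_def P0_def P1_def dJ0_def dJ1_def goodD)
lemma od_dJ: "good D h \<Longrightarrow> od_map (\<lambda>a. dJ0 D h a + dJ1 c a) = dJ1 c"
  by (intro ext jel_eqI) (simp_all add: od_map_def P0_def P1_def dJ0_def dJ1_def goodD)
lemma ev_Phi: "ev_map (Phi \<iota> \<delta> s z) = PA (z One)"
  by (intro ext jel_eqI) (simp_all add: ev_map_def P0_def P1_def Phi_pt PA_def PB_def)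
lemma od_Phi: "od_map (Phi \<iota> \<delta> s z) = (\<lambda>a. scal \<iota> s (PB (z X0) a))"
  by (intro ext jel_eqI) (simp_all add: od_map_def P0_def P1_def Phi_pt PA_def PB_def scal_def)

lemma KL: assumes g: "good D h"
  shows "sbr (\<lambda>a. dJ0 D h a + dJ1 c a) (Phi \<iota> \<delta> s z) = Phi \<iota> \<delta> s (\<lambda>b. dJ0 D h z b + dJ1 (- (\<iota> s * c)) z b)"
  unfolding sbr_def ev_dJ[OF g] od_dJ[OF g] ev_Phi od_Phi
  by (intro ext jel_eqI) (simp_all add: Phi_pt PA_def PB_def dJ0_def dJ1_def scal_def goodD[OF g] good_const[OF g] algebra_simps)

end


fun partner :: "basis \<Rightarrow> basis" where
  "partner One = X0" | "partner X0 = One" | "partner (W i) = Xs i" | "partner (Xs i) = W i"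

lemma elem_Jpar: "elem b f \<in> Jpar (odd_b b)" by (simp add: Jpar_def)
lemma elem_Jdeg: "elem b f \<in> Jdeg (deg b)" by (simp add: Jdeg_def)
lemma basis_all: "(\<forall>b. P b) = (P One \<and> P (W I1) \<and> P (W I2) \<and> P (W I3) \<and> P X0 \<and> P (Xs I1) \<and> P (Xs I2) \<and> P (Xs I3))"
  using basis_cases[of P] by blast
lemma same_pd: "odd_b b' = odd_b b \<Longrightarrow> deg b' = deg b \<Longrightarrow> b' = b"
proof -
  have "\<forall>b b'. odd_b b' = odd_b b \<longrightarrow> deg b' = deg b \<longrightarrow> b' = b" by (simp only: basis_all) simp
  then show "odd_b b' = odd_b b \<Longrightarrow> deg b' = deg b \<Longrightarrow> b' = b" by blast
qed
lemma part_pd: "odd_b b' \<noteq> odd_b b \<Longrightarrow> deg b' = deg b \<Longrightarrow> b' = partner b"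
proof -
  have "\<forall>b b'. odd_b b' \<noteq> odd_b b \<longrightarrow> deg b' = deg b \<longrightarrow> b' = partner b" by (simp only: basis_all) simp
  then show "odd_b b' \<noteq> odd_b b \<Longrightarrow> deg b' = deg b \<Longrightarrow> b' = partner b" by blast
qed
context ck begin
lemma elem_add: "elem b ((x::'z) + y) = elem b x + elem b y" by (rule ext) simp
lemma elem_scal: "elem b (\<iota> k * x) = scal \<iota> k (elem b x)" by (rule ext) (simp add: scal_def)
lemma decomp: "(a::'z jel) = elem One (a One) + elem (W I1) (a (W I1)) + elem (W I2) (a (W I2)) + elem (W I3) (a (W I3))
   + elem X0 (a X0) + elem (Xs I1) (a (Xs I1)) + elem (Xs I2) (a (Xs I2)) + elem (Xs I3) (a (Xs I3))"
  by (rule jel_eqI) simp_all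

lemma jmE_One: "jmult \<delta> (elem One f) (elem b g) = elem b (f * g)"
  by (rule jel_eqI; rule_tac b=b in basis_cases; simp)
lemma jmE_WW: "jmult \<delta> (elem (W i) f) (elem (W i) g) = elem One (wsq i * (f * g))"
  by (rule jel_eqI; cases i; simp)
lemma jmE_XXs: "jmult \<delta> (elem X0 f) (elem (Xs j) g) = elem (W j) (- (f * g))"
  by (rule jel_eqI; cases j; simp)
lemma jmE_XX: "jmult \<delta> (elem X0 f) (elem X0 g) = elem One (\<delta> f * g - f * \<delta> g)"
  by (rule jel_eqI; simp)
lemma jmE_WX: "jmult \<delta> (elem (W i) f) (elem X0 g) = elem (Xs i) (\<delta> f * g)"
  by (rule jel_eqI; cases i; simp)

end


context ck begin
context
  fixes d0 d1 :: "'z jel \<Rightarrow> 'z jel"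
  assumes A0: "\<And>x y. d0 (x + y) = d0 x + d0 y"
  and S0: "\<And>k x. d0 (scal \<iota> k x) = scal \<iota> k (d0 x)"
  and P0: "\<And>q x. x \<in> Jpar q \<Longrightarrow> d0 x \<in> Jpar q"
  and L0: "\<And>q r x y. x \<in> Jpar q \<Longrightarrow> y \<in> Jpar r \<Longrightarrow> d0 (jmult \<delta> x y) = jmult \<delta> (d0 x) y + jmult \<delta> x (d0 y)"
  and A1: "\<And>x y. d1 (x + y) = d1 x + d1 y"
  and P1: "\<And>q x. x \<in> Jpar q \<Longrightarrow> d1 x \<in> Jpar (\<not> q)"
  and L1: "\<And>q r x y. x \<in> Jpar q \<Longrightarrow> y \<in> Jpar r \<Longrightarrow> d1 (jmult \<delta> x y) = jmult \<delta> (d1 x) y + zmul (ssign True q) (jmult \<delta> x (d1 y))"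
  and Dg: "\<And>\<beta> x. x \<in> Jdeg \<beta> \<Longrightarrow> (d0 x + d1 x) \<in> Jdeg \<beta>"
begin

definition phi where "phi b f = d0 (elem b f) b"
definition psi where "psi b f = d1 (elem b f) (partner b)"

lemma supp0: "d0 (elem b f) = elem b (phi b f)"
proof (rule ext)
  fix b'
  show "d0 (elem b f) b' = elem b (phi b f) b'"
  proof (cases "b' = b")
    case True then show ?thesis by (simp add: phi_def)
  next
    case False
    have p0: "d0 (elem b f) \<in> Jpar (odd_b b)" using P0 elem_Jpar .
    have p1: "d1 (elem b f) \<in> Jpar (\<not> odd_b b)" using P1 elem_Jpar .
    have dg: "d0 (elem b f) + d1 (elem b f) \<in> Jdeg (deg b)" using Dg elem_Jdeg .
    show ?thesis
    proof (cases "odd_b b' = odd_b b")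
      case True
      then have "deg b' \<noteq> deg b" using False same_pd by blast
      then have "(d0 (elem b f) + d1 (elem b f)) b' = 0" using dg Jdeg_E by blast
      moreover have "d1 (elem b f) b' = 0" using p1 True unfolding Jpar_def by simp
      ultimately show ?thesis using False by simp
    next
      case F: False
      then show ?thesis using p0 False unfolding Jpar_def by simp
    qed
  qed
qed

lemma supp1: "d1 (elem b f) = elem (partner b) (psi b f)"
proof (rule ext)
  fix b'
  show "d1 (elem b f) b' = elem (partner b) (psi b f) b'"
  proof (cases "b' = partner b")
    case True then show ?thesis by (simp add: psi_def)
  next
    case False
    have p0: "d0 (elem b f) \<in> Jpar (odd_b b)" using P0 elem_Jpar .
    have p1: "d1 (elem b f) \<in> Jpar (\<not> odd_b b)" using P1 elem_Jpar .
    have dg: "d0 (elem b f) + d1 (elem b f) \<in> Jdeg (deg b)" using Dg elem_Jdeg .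
    show ?thesis
    proof (cases "odd_b b' = odd_b b")
      case True
      then show ?thesis using p1 False unfolding Jpar_def by simp
    next
      case F: False
      then have "deg b' \<noteq> deg b" using False part_pd by blast
      then have "(d0 (elem b f) + d1 (elem b f)) b' = 0" using dg Jdeg_E by blast
      moreover have "d0 (elem b f) b' = 0" using p0 F unfolding Jpar_def by simp
      ultimately show ?thesis using False by simp
    qed
  qed
qed

lemma E: assumes "jmult \<delta> (elem b f) (elem b' g) = elem b'' u"
  shows "phi b'' u = (jmult \<delta> (elem b (phi b f)) (elem b' g) + jmult \<delta> (elem b f) (elem b' (phi b' g))) b''"
proof -
  have "phi b'' u = d0 (jmult \<delta> (elem b f) (elem b' g)) b''" using assms by (simp add: phi_def)
  also have "\<dots> = (jmult \<delta> (d0 (elem b f)) (elem b' g) + jmult \<delta> (elem b f) (d0 (elem b' g))) b''"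
    by (simp add: L0[OF elem_Jpar elem_Jpar])
  finally show ?thesis by (simp only: supp0)
qed

lemma EO: assumes "jmult \<delta> (elem b f) (elem b' g) = elem b'' u"
  shows "psi b'' u = (jmult \<delta> (elem (partner b) (psi b f)) (elem b' g)
     + zmul (ssign True (odd_b b)) (jmult \<delta> (elem b f) (elem (partner b') (psi b' g)))) (partner b'')"
proof -
  have "psi b'' u = d1 (jmult \<delta> (elem b f) (elem b' g)) (partner b'')" using assms by (simp add: psi_def)
  also have "\<dots> = (jmult \<delta> (d1 (elem b f)) (elem b' g) + zmul (ssign True (odd_b b)) (jmult \<delta> (elem b f) (d1 (elem b' g)))) (partner b'')"
    by (simp add: L1[OF elem_Jpar elem_Jpar])
  finally show ?thesis by (simp only: supp1)
qed

lemma phi_add: "phi b (x + y) = phi b x + phi b y"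
  by (simp add: phi_def elem_add A0)
lemma phi_lin: "phi b (\<iota> k * x) = \<iota> k * phi b x"
  unfolding phi_def elem_scal S0 by (simp add: scal_def)
lemma phi_0: "phi b 0 = 0"
  using phi_add[of b 0 0] by simp
lemma phi_neg: "phi b (- x) = - phi b x"
  using phi_add[of b "-x" x] phi_0 by (simp add: add_eq_0_iff2)

lemma E1: "phi One (f * g) = phi One f * g + f * phi One g"
  using E[OF jmE_One[of f One g]] by simp
lemma E1_1: "phi One 1 = 0"
  using E1[of 1 1] by simp
lemma E1_m1: "phi One (-1) = 0"
  using E1_1 phi_neg[of One 1] by simp
lemma E2: "phi (W i) f = phi One f + f * phi (W i) 1"
  using E[OF jmE_One[of f "W i" 1]] by (cases i) simp_all
lemma E3: "phi (W i) 1 = 0"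
proof -
  have "phi One (wsq i * (1 * 1)) = (jmult \<delta> (elem (W i) (phi (W i) 1)) (elem (W i) 1)
     + jmult \<delta> (elem (W i) 1) (elem (W i) (phi (W i) 1))) One" by (rule E[OF jmE_WW])
  then have "2 * phi (W i) 1 = 0" using E1_1 E1_m1 by (cases i) (simp_all add: algebra_simps)
  then show ?thesis by (rule two_cancel)
qed
lemma E4: "phi X0 f = phi One f + f * phi X0 1"
  using E[OF jmE_One[of f X0 1]] by simp
lemma E5: "phi (Xs i) f = phi One f + f * phi (Xs i) 1"
  using E[OF jmE_One[of f "Xs i" 1]] by (cases i) simp_all
lemma E6: "phi (Xs j) 1 = - phi X0 1"
proof -
  have "phi (W j) (- (1 * 1)) = (jmult \<delta> (elem X0 (phi X0 1)) (elem (Xs j) 1)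
     + jmult \<delta> (elem X0 1) (elem (Xs j) (phi (Xs j) 1))) (W j)" by (rule E[OF jmE_XXs])
  then have "0 = - phi X0 1 - phi (Xs j) 1" using E2[of j "-1"] E3[of j] E1_m1 by (cases j) simp_all
  then show ?thesis by (simp add: algebra_simps eq_neg_iff_add_eq_0)
qed
lemma E7: "phi One (\<delta> f) = \<delta> (phi One f) + 2 * phi X0 1 * \<delta> f"
proof -
  have "phi One (\<delta> f * 1 - f * \<delta> 1) = (jmult \<delta> (elem X0 (phi X0 f)) (elem X0 1)
     + jmult \<delta> (elem X0 f) (elem X0 (phi X0 1))) One" by (rule E[OF jmE_XX])
  then show ?thesis using E4[of f] by (simp add: algebra_simps)
qed

lemma good_phi: "good (phi One) (phi X0 1)"
  unfolding good_def using phi_add phi_lin E1 E7 by blast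

lemma O1a: "psi (W i) f = f * psi (W i) 1"
  using EO[OF jmE_One[of f "W i" 1]] by (cases i) simp_all
lemma O1: "psi One f = 0"
proof (rule span_zero)
  fix g
  have "psi (W I1) (f * g) = \<delta> g * psi One f + f * psi (W I1) g"
    using EO[OF jmE_One[of f "W I1" g]] by simp
  then show "psi One f * \<delta> g = 0" using O1a[of I1 "f * g"] O1a[of I1 g] by (simp add: algebra_simps)
qed
lemma O2: "psi X0 f = f * psi X0 1"
  using EO[OF jmE_One[of f X0 1]] O1 by simp
lemma O3: "psi (Xs i) f = f * psi (Xs i) 1"
  using EO[OF jmE_One[of f "Xs i" 1]] O1 by (cases i) simp_all
lemma O4a: "\<delta> f * psi (Xs i) 1 = f * psi (W i) 1 + f * psi X0 1"
proof -
  have "psi (Xs i) (\<delta> f * 1) = (jmult \<delta> (elem (partner (W i)) (psi (W i) f)) (elem X0 1)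
     + zmul (ssign True (odd_b (W i))) (jmult \<delta> (elem (W i) f) (elem (partner X0) (psi X0 1)))) (partner (Xs i))"
    by (rule EO[OF jmE_WX])
  then show ?thesis using O3[of i "\<delta> f"] O1a[of i f] by (cases i) (simp_all add: algebra_simps)
qed
lemma O4b: "psi (W i) 1 = - psi X0 1"
  using O4a[of 1 i] by (simp add: eq_neg_iff_add_eq_0 algebra_simps)
lemma O4: "psi (Xs i) 1 = 0"
proof (rule span_zero)
  fix g show "psi (Xs i) 1 * \<delta> g = 0" using O4a[of g i] O4b[of i] by (simp add: algebra_simps)
qed

lemma char_main: "d0 a + d1 a = dJ0 (phi One) (phi X0 1) a + dJ1 (psi X0 1) a"
proof -
  have e0: "d0 a = d0 (elem One (a One) + elem (W I1) (a (W I1)) + elem (W I2) (a (W I2)) + elem (W I3) (a (W I3))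
   + elem X0 (a X0) + elem (Xs I1) (a (Xs I1)) + elem (Xs I2) (a (Xs I2)) + elem (Xs I3) (a (Xs I3)))"
    by (rule arg_cong[where f=d0], rule decomp)
  have e1: "d1 a = d1 (elem One (a One) + elem (W I1) (a (W I1)) + elem (W I2) (a (W I2)) + elem (W I3) (a (W I3))
   + elem X0 (a X0) + elem (Xs I1) (a (Xs I1)) + elem (Xs I2) (a (Xs I2)) + elem (Xs I3) (a (Xs I3)))"
    by (rule arg_cong[where f=d1], rule decomp)
  have f: "\<And>i. phi (W i) f = phi One f" "\<And>i. phi (Xs i) f = phi One f - f * phi X0 1" "\<And>i. psi (W i) f = - (f * psi X0 1)"
    "\<And>i. psi (Xs i) f = 0" for f
    using E2 E3 E5 E6 O1a O4b O3 O4 by simp_all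
  show ?thesis unfolding e0 e1 A0 A1 supp0 supp1
    by (rule jel_eqI) (simp_all add: dJ0_def dJ1_def f O1 O2[of "a X0"] E4[of "a X0"] algebra_simps)
qed

lemma char_ex: "\<exists>Dz h c. good Dz h \<and> (\<forall>a. d0 a + d1 a = dJ0 Dz h a + dJ1 c a)"
  using good_phi char_main by blast

end
end

context ck begin

lemma DerJ_char: assumes "D \<in> DerJ_deg \<iota> \<delta> (False, False)"
  shows "\<exists>Dz h c. good Dz h \<and> D = (\<lambda>a. dJ0 Dz h a + dJ1 c a)"
proof -
  obtain d0 d1 where D: "D = restrict (\<lambda>a. d0 a + d1 a) UNIV" and s0: "sder_on \<iota> \<delta> UNIV False d0"
    and s1: "sder_on \<iota> \<delta> UNIV True d1" and dm: "deg_map (False, False) D"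
    using assms unfolding DerJ_deg_def Der_on_def by blast
  have D': "D = (\<lambda>a. d0 a + d1 a)" using D by (simp add: restrict_UNIV')
  have g: "\<And>\<beta>. gadd (False, False) \<beta> = \<beta>" by (simp add: gadd_def)
  have "\<exists>Dz h c. good Dz h \<and> (\<forall>a. d0 a + d1 a = dJ0 Dz h a + dJ1 c a)"
  proof (rule char_ex)
    show "\<And>x y. d0 (x + y) = d0 x + d0 y" using s0 unfolding sder_on_def by blast
    show "\<And>k x. d0 (scal \<iota> k x) = scal \<iota> k (d0 x)" using s0 unfolding sder_on_def by blast
    show "\<And>x y. d1 (x + y) = d1 x + d1 y" using s1 unfolding sder_on_def by blast
    show "\<And>q x. x \<in> Jpar q \<Longrightarrow> d0 x \<in> Jpar q" using s0 unfolding sder_on_def by force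
    show "\<And>q x. x \<in> Jpar q \<Longrightarrow> d1 x \<in> Jpar (\<not> q)" using s1 unfolding sder_on_def by force
    show "\<And>q r x y. x \<in> Jpar q \<Longrightarrow> y \<in> Jpar r \<Longrightarrow> d0 (jmult \<delta> x y) = jmult \<delta> (d0 x) y + jmult \<delta> x (d0 y)"
      using s0 unfolding sder_on_def by force
    show "\<And>q r x y. x \<in> Jpar q \<Longrightarrow> y \<in> Jpar r \<Longrightarrow> d1 (jmult \<delta> x y) = jmult \<delta> (d1 x) y + zmul (ssign True q) (jmult \<delta> x (d1 y))"
      using s1 unfolding sder_on_def by blast
    show "\<And>\<beta> x. x \<in> Jdeg \<beta> \<Longrightarrow> d0 x + d1 x \<in> Jdeg \<beta>"
      using dm unfolding deg_map_def D' g by blast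
  qed
  then show ?thesis unfolding D' by metis
qed

lemma dJ_deg: assumes g: "good Dz h" shows "deg_map (False, False) (\<lambda>a. dJ0 Dz h a + dJ1 c a)"
  unfolding deg_map_def
proof (intro allI ballI)
  fix \<beta> and a :: "'z jel" assume a: "a \<in> Jdeg \<beta>"
  obtain p1 p2 where b: "\<beta> = (p1, p2)" by (cases \<beta>)
  have z: "\<And>b. deg b \<noteq> (p1, p2) \<Longrightarrow> a b = 0" using Jdeg_E[OF a] b by blast
  show "dJ0 Dz h a + dJ1 c a \<in> Jdeg (gadd (False, False) \<beta>)"
    unfolding b Jdeg_def gadd_def
    by (cases p1; cases p2; intro CollectI allI; rule_tac b=b in basis_cases;
        simp add: dJ0_def dJ1_def z goodD[OF g])
qed

lemma DerJ_mem: assumes g: "good Dz h" shows "(\<lambda>a. dJ0 Dz h a + dJ1 c a) \<in> DerJ_deg \<iota> \<delta> (False, False)"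
proof -
  have "(\<lambda>a. dJ0 Dz h a + dJ1 c a) \<in> Der_on \<iota> \<delta> UNIV"
    unfolding Der_on_def
    by (rule CollectI, rule exI[of _ "dJ0 Dz h"], rule exI[of _ "dJ1 c"])
      (simp add: restrict_UNIV' sder_dJ0[OF g] sder_dJ1)
  then show ?thesis unfolding DerJ_deg_def using dJ_deg[OF g] by simp
qed

end

context ck begin

lemma Kset_add: "(x::'z jel) \<in> Kset \<Longrightarrow> y \<in> Kset \<Longrightarrow> x + y \<in> Kset" by (simp add: Kset_def)
lemma elem_K: "elem One f \<in> Kset" "elem X0 f \<in> Kset" by (simp_all add: Kset_def)

lemma PhiStar_form: assumes g: "good Dz h"
  shows "PhiStar \<iota> \<delta> s (\<lambda>a. dJ0 Dz h a + dJ1 c a) = restrict (\<lambda>z. dJ0 Dz h z + dJ1 (- (\<iota> s * c)) z) Kset"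
proof (rule ext)
  fix z :: "'z jel"
  show "PhiStar \<iota> \<delta> s (\<lambda>a. dJ0 Dz h a + dJ1 c a) z = restrict (\<lambda>z. dJ0 Dz h z + dJ1 (- (\<iota> s * c)) z) Kset z"
  proof (cases "z \<in> Kset")
    case True
    have k: "dJ0 Dz h z + dJ1 (- (\<iota> s * c)) z \<in> Kset" using True dJ0_K[OF True g] dJ1_K[OF True] Kset_add by blast
    have e: "(\<lambda>b. dJ0 Dz h z b + dJ1 (- (\<iota> s * c)) z b) = dJ0 Dz h z + dJ1 (- (\<iota> s * c)) z"
      by (simp add: plus_fun_def)
    show ?thesis using True unfolding PhiStar_def restrict_def KL[OF g] e
      by (simp add: the_inv_into_f_f[OF Phi_inj k])
  next
    case False then show ?thesis by (simp add: PhiStar_def)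
  qed
qed

lemma sbr_in: assumes "D \<in> DerJ_deg \<iota> \<delta> (False, False)" "z \<in> Kset"
  shows "sbr D (Phi \<iota> \<delta> s z) \<in> Phi \<iota> \<delta> s ` Kset"
proof -
  obtain Dz h c where g: "good Dz h" and D: "D = (\<lambda>a. dJ0 Dz h a + dJ1 c a)" using DerJ_char[OF assms(1)] by blast
  have k: "dJ0 Dz h z + dJ1 (- (\<iota> s * c)) z \<in> Kset" using dJ0_K[OF assms(2) g] dJ1_K[OF assms(2)] Kset_add by blast
  have e: "(\<lambda>b. dJ0 Dz h z b + dJ1 (- (\<iota> s * c)) z b) = dJ0 Dz h z + dJ1 (- (\<iota> s * c)) z"
    by (simp add: plus_fun_def)
  show ?thesis unfolding D KL[OF g] e using k by blast
qed

lemma PhiStar_Der: assumes "D \<in> DerJ_deg \<iota> \<delta> (False, False)"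
  shows "PhiStar \<iota> \<delta> s D \<in> Der_on \<iota> \<delta> Kset"
proof -
  obtain Dz h c where g: "good Dz h" and D: "D = (\<lambda>a. dJ0 Dz h a + dJ1 c a)" using DerJ_char[OF assms(1)] by blast
  show ?thesis unfolding D PhiStar_form[OF g] Der_on_def
    by (rule CollectI, rule exI[of _ "dJ0 Dz h"], rule exI[of _ "dJ1 (- (\<iota> s * c))"])
      (simp add: sderK sder_dJ0[OF g] sder_dJ1 dJ0_K[OF _ g] dJ1_K)
qed

lemma Kchar: assumes s0: "sder_on \<iota> \<delta> Kset False d0"
  shows "\<exists>Dz h. good Dz h \<and> (\<forall>z\<in>Kset. d0 z = dJ0 Dz h z)"
proof -
  have A0: "\<And>x y. x \<in> Kset \<Longrightarrow> y \<in> Kset \<Longrightarrow> d0 (x + y) = d0 x + d0 y" using s0 unfolding sder_on_def by blast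
  have S0: "\<And>k x. x \<in> Kset \<Longrightarrow> d0 (scal \<iota> k x) = scal \<iota> k (d0 x)" using s0 unfolding sder_on_def by blast
  have P0: "\<And>q x. x \<in> Kset \<Longrightarrow> x \<in> Jpar q \<Longrightarrow> d0 x \<in> Kset \<and> d0 x \<in> Jpar q" using s0 unfolding sder_on_def by force
  have L0: "\<And>q r x y. x \<in> Kset \<Longrightarrow> x \<in> Jpar q \<Longrightarrow> y \<in> Kset \<Longrightarrow> y \<in> Jpar r \<Longrightarrow>
      d0 (jmult \<delta> x y) = jmult \<delta> (d0 x) y + jmult \<delta> x (d0 y)" using s0 unfolding sder_on_def by force
  define p where "p b f = d0 (elem b f) b" for b f
  have s1: "d0 (elem One f) = elem One (p One f)" for f
  proof -
    have "d0 (elem One f) \<in> Kset" "d0 (elem One f) \<in> Jpar False" using P0[OF elem_K(1) elem_Jpar[of One f]] by simp_all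
    then show ?thesis unfolding p_def by (intro jel_eqI) (auto simp: Kset_def Jpar_def)
  qed
  have s2: "d0 (elem X0 f) = elem X0 (p X0 f)" for f
  proof -
    have "d0 (elem X0 f) \<in> Kset" "d0 (elem X0 f) \<in> Jpar True" using P0[OF elem_K(2) elem_Jpar[of X0 f]] by simp_all
    then show ?thesis unfolding p_def by (intro jel_eqI) (auto simp: Kset_def Jpar_def)
  qed
  have L: "p b'' u = (jmult \<delta> (d0 (elem b f)) (elem b' g) + jmult \<delta> (elem b f) (d0 (elem b' g))) b''"
    if "jmult \<delta> (elem b f) (elem b' g) = elem b'' u" "b \<in> {One, X0}" "b' \<in> {One, X0}" for b b' b'' f g u
  proof -
    have "elem b f \<in> Kset" "elem b' g \<in> Kset" using that(2,3) elem_K by auto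
    then show ?thesis unfolding p_def that(1)[symmetric] using L0 elem_Jpar by metis
  qed
  have padd: "p b (x + y) = p b x + p b y" if "b \<in> {One, X0}" for b x y
  proof -
    have "elem b x \<in> Kset" "elem b y \<in> Kset" using that elem_K by auto
    then show ?thesis unfolding p_def elem_add by (simp only: A0 plus_fun_apply)
  qed
  have plin: "p b (\<iota> k * x) = \<iota> k * p b x" if "b \<in> {One, X0}" for b k x
  proof -
    have "elem b x \<in> Kset" using that elem_K by auto
    then show ?thesis unfolding p_def elem_scal by (simp only: S0) (simp add: scal_def)
  qed
  have padd1: "p One (x + y) = p One x + p One y" for x y using padd by simp
  have plin1: "p One (\<iota> k * x) = \<iota> k * p One x" for k x using plin by simp
  have E1: "p One (f * g) = p One f * g + f * p One g" for f g
    using L[OF jmE_One[of f One g]] by (simp add: s1)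
  have E4: "p X0 f = p One f + f * p X0 1" for f
    using L[OF jmE_One[of f X0 1]] by (simp add: s1 s2)
  have E7: "p One (\<delta> f) = \<delta> (p One f) + 2 * p X0 1 * \<delta> f" for f
    using L[OF jmE_XX[of f 1]] E4[of f] by (simp add: s1 s2 algebra_simps)
  have g: "good (p One) (p X0 1)" unfolding good_def using padd1 plin1 E1 E7 by blast
  have "d0 z = dJ0 (p One) (p X0 1) z" if z: "z \<in> Kset" for z
  proof -
    have zz: "z = elem One (z One) + elem X0 (z X0)" using z by (intro jel_eqI) (auto simp: Kset_def)
    have "d0 z = elem One (p One (z One)) + elem X0 (p X0 (z X0))"
      by (subst zz) (simp add: A0 elem_K s1 s2)
    then show ?thesis using z E4[of "z X0"] by (intro jel_eqI) (auto simp: Kset_def dJ0_def goodD[OF g])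
  qed
  then show ?thesis using g by blast
qed

end

context ck begin

lemma dJ1_eta: "z \<in> Kset \<Longrightarrow> dJ1 c z = eta c z"
  by (intro jel_eqI) (auto simp: dJ1_def eta_def Kset_def)

lemma PhiStar_inj: "inj_on (PhiStar \<iota> \<delta> s) (DerJ_deg \<iota> \<delta> (False, False))"
proof (rule inj_onI)
  fix D1 D2 assume d1: "D1 \<in> DerJ_deg \<iota> \<delta> (False, False)" and d2: "D2 \<in> DerJ_deg \<iota> \<delta> (False, False)"
    and e: "PhiStar \<iota> \<delta> s D1 = PhiStar \<iota> \<delta> s D2"
  obtain Dz1 h1 c1 where g1: "good Dz1 h1" and D1: "D1 = (\<lambda>a. dJ0 Dz1 h1 a + dJ1 c1 a)" using DerJ_char[OF d1] by blast
  obtain Dz2 h2 c2 where g2: "good Dz2 h2" and D2: "D2 = (\<lambda>a. dJ0 Dz2 h2 a + dJ1 c2 a)" using DerJ_char[OF d2] by blast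
  note e' = e[unfolded D1 D2 PhiStar_form[OF g1] PhiStar_form[OF g2]]
  have "Dz1 f = Dz2 f" for f
    using fun_cong[OF fun_cong[OF e', of "elem One f"], of One]
    by (simp add: dJ0_def dJ1_def elem_K)
  then have ez: "Dz1 = Dz2" by blast
  have x: "dJ0 Dz1 h1 (elem X0 1) + dJ1 (- (\<iota> s * c1)) (elem X0 1) = dJ0 Dz2 h2 (elem X0 1) + dJ1 (- (\<iota> s * c2)) (elem X0 1)"
    using fun_cong[OF e', of "elem X0 1"] by (simp add: elem_K)
  have "h1 = h2" using fun_cong[OF x, of X0] ez by (simp add: dJ0_def dJ1_def goodD[OF g2])
  moreover have "\<iota> s * c1 = \<iota> s * c2" using fun_cong[OF x, of One] ez by (simp add: dJ0_def dJ1_def goodD[OF g2])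
  then have "\<iota> s * (\<iota> s * c1) = \<iota> s * (\<iota> s * c2)" by simp
  then have "c1 = c2" by simp
  ultimately show "D1 = D2" unfolding D1 D2 ez by simp
qed

lemma PhiStar_img: "PhiStar \<iota> \<delta> s ` DerJ_deg \<iota> \<delta> (False, False) = DerbarK \<iota> \<delta>"
proof
  show "PhiStar \<iota> \<delta> s ` DerJ_deg \<iota> \<delta> (False, False) \<subseteq> DerbarK \<iota> \<delta>"
  proof
    fix x assume "x \<in> PhiStar \<iota> \<delta> s ` DerJ_deg \<iota> \<delta> (False, False)"
    then obtain D where d: "D \<in> DerJ_deg \<iota> \<delta> (False, False)" and x: "x = PhiStar \<iota> \<delta> s D" by blast
    obtain Dz h c where g: "good Dz h" and D: "D = (\<lambda>a. dJ0 Dz h a + dJ1 c a)" using DerJ_char[OF d] by blast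
    have "x = restrict (\<lambda>z. dJ0 Dz h z + eta (- (\<iota> s * c)) z) Kset"
      unfolding x D PhiStar_form[OF g] by (rule restrict_ext) (simp add: dJ1_eta)
    moreover have "sder_on \<iota> \<delta> Kset False (dJ0 Dz h)" by (simp add: sderK sder_dJ0[OF g] dJ0_K[OF _ g])
    ultimately show "x \<in> DerbarK \<iota> \<delta>" unfolding DerbarK_def by blast
  qed
next
  show "DerbarK \<iota> \<delta> \<subseteq> PhiStar \<iota> \<delta> s ` DerJ_deg \<iota> \<delta> (False, False)"
  proof
    fix x assume "x \<in> DerbarK \<iota> \<delta>"
    then obtain d0 a where x: "x = restrict (\<lambda>z. d0 z + eta a z) Kset" and s0: "sder_on \<iota> \<delta> Kset False d0"
      unfolding DerbarK_def by blast
    obtain Dz h where g: "good Dz h" and d0: "\<forall>z\<in>Kset. d0 z = dJ0 Dz h z" using Kchar[OF s0] by blast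
    have "PhiStar \<iota> \<delta> s (\<lambda>y. dJ0 Dz h y + dJ1 (\<iota> s * a) y) = x"
      unfolding x PhiStar_form[OF g] by (rule restrict_ext) (simp add: dJ1_eta d0)
    then show "x \<in> PhiStar \<iota> \<delta> s ` DerJ_deg \<iota> \<delta> (False, False)" using DerJ_mem[OF g] by blast
  qed
qed

lemma good_num: assumes g: "good D h" shows "D (numeral n) = 0"
proof (induction n)
  case One then show ?case by (simp add: goodD[OF g])
next
  case (Bit0 n) then show ?case by (simp only: numeral_Bit0 goodD(1)[OF g]) simp
next
  case (Bit1 n) then show ?case by (simp only: numeral_Bit1 goodD(1)[OF g] goodD(8)[OF g]) simp
qed
lemma good_add: assumes g1: "good D1 h1" and g2: "good D2 h2" shows "good (\<lambda>x. D1 x + D2 x) (h1 + h2)"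
  unfolding good_def by (simp add: goodD[OF g1] goodD[OF g2] good_const[OF g1] good_const[OF g2] algebra_simps)
lemma good_scal: assumes g1: "good D1 h1" shows "good (\<lambda>x. \<iota> k * D1 x) (\<iota> k * h1)"
  unfolding good_def by (simp add: goodD[OF g1] good_const[OF g1] algebra_simps)
lemma good_br: assumes g1: "good D1 h1" and g2: "good D2 h2"
  shows "good (\<lambda>x. D1 (D2 x) - D2 (D1 x)) (D1 h2 - D2 h1)"
  unfolding good_def by (simp add: goodD[OF g1] goodD[OF g2] good_const[OF g1] good_const[OF g2]
     good_num[OF g1] good_num[OF g2] algebra_simps)

lemma PhiStar_add: assumes d1: "D \<in> DerJ_deg \<iota> \<delta> (False, False)" and d2: "E \<in> DerJ_deg \<iota> \<delta> (False, False)"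
  shows "PhiStar \<iota> \<delta> s (\<lambda>a. D a + E a) = restrict (\<lambda>z. PhiStar \<iota> \<delta> s D z + PhiStar \<iota> \<delta> s E z) Kset"
proof -
  obtain Dz1 h1 c1 where g1: "good Dz1 h1" and D1: "D = (\<lambda>a. dJ0 Dz1 h1 a + dJ1 c1 a)" using DerJ_char[OF d1] by blast
  obtain Dz2 h2 c2 where g2: "good Dz2 h2" and D2: "E = (\<lambda>a. dJ0 Dz2 h2 a + dJ1 c2 a)" using DerJ_char[OF d2] by blast
  have e: "(\<lambda>a. D a + E a) = (\<lambda>a. dJ0 (\<lambda>x. Dz1 x + Dz2 x) (h1 + h2) a + dJ1 (c1 + c2) a)"
    unfolding D1 D2 by (intro ext jel_eqI) (simp_all add: dJ0_def dJ1_def algebra_simps)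
  have l: "PhiStar \<iota> \<delta> s (\<lambda>a. D a + E a) = restrict (\<lambda>z. dJ0 (\<lambda>x. Dz1 x + Dz2 x) (h1 + h2) z + dJ1 (- (\<iota> s * (c1 + c2))) z) Kset"
    by (simp only: e PhiStar_form[OF good_add[OF g1 g2]])
  show ?thesis unfolding l unfolding D1 D2 PhiStar_form[OF g1] PhiStar_form[OF g2]
    by (rule restrict_ext) (intro jel_eqI, simp_all add: dJ0_def dJ1_def algebra_simps)
qed

lemma PhiStar_scal: assumes d1: "D \<in> DerJ_deg \<iota> \<delta> (False, False)"
  shows "PhiStar \<iota> \<delta> s (\<lambda>a. scal \<iota> k (D a)) = restrict (\<lambda>z. scal \<iota> k (PhiStar \<iota> \<delta> s D z)) Kset"
proof -
  obtain Dz1 h1 c1 where g1: "good Dz1 h1" and D1: "D = (\<lambda>a. dJ0 Dz1 h1 a + dJ1 c1 a)" using DerJ_char[OF d1] by blast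
  have e: "(\<lambda>a. scal \<iota> k (D a)) = (\<lambda>a. dJ0 (\<lambda>x. \<iota> k * Dz1 x) (\<iota> k * h1) a + dJ1 (\<iota> k * c1) a)"
    unfolding D1 by (intro ext jel_eqI) (simp_all add: dJ0_def dJ1_def scal_def algebra_simps)
  have l: "PhiStar \<iota> \<delta> s (\<lambda>a. scal \<iota> k (D a)) = restrict (\<lambda>z. dJ0 (\<lambda>x. \<iota> k * Dz1 x) (\<iota> k * h1) z + dJ1 (- (\<iota> s * (\<iota> k * c1))) z) Kset"
    by (simp only: e PhiStar_form[OF good_scal[OF g1]])
  show ?thesis unfolding l unfolding D1 PhiStar_form[OF g1]
    by (rule restrict_ext) (intro jel_eqI, simp_all add: dJ0_def dJ1_def scal_def algebra_simps)
qed

lemma sbr_dJ: assumes g1: "good D1 h1" and g2: "good D2 h2"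
  shows "sbr (\<lambda>a. dJ0 D1 h1 a + dJ1 c1 a) (\<lambda>a. dJ0 D2 h2 a + dJ1 c2 a)
    = (\<lambda>a. dJ0 (\<lambda>x. D1 (D2 x) - D2 (D1 x)) (D1 h2 - D2 h1) a + dJ1 (D1 c2 - h1 * c2 - (D2 c1 - h2 * c1)) a)"
  unfolding sbr_def ev_dJ[OF g1] od_dJ[OF g1] ev_dJ[OF g2] od_dJ[OF g2]
  by (intro ext jel_eqI) (simp_all add: dJ0_def dJ1_def goodD[OF g1] goodD[OF g2] algebra_simps)

lemma P0_K: "x \<in> Kset \<Longrightarrow> P0 x \<in> Kset" by (simp add: Kset_def P0_def)
lemma P1_K: "x \<in> Kset \<Longrightarrow> P1 x \<in> Kset" by (simp add: Kset_def P1_def)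
lemma ev_K: fixes F :: "'z jel \<Rightarrow> 'z jel" assumes "\<And>z. z \<in> Kset \<Longrightarrow> F z \<in> Kset" "z \<in> Kset" shows "ev_map F z \<in> Kset"
proof -
  have "F (P0 z) \<in> Kset" "F (P1 z) \<in> Kset" using assms P0_K P1_K by auto
  then show ?thesis unfolding ev_map_def by (blast intro: Kset_add P0_K P1_K)
qed
lemma od_K: fixes F :: "'z jel \<Rightarrow> 'z jel" assumes "\<And>z. z \<in> Kset \<Longrightarrow> F z \<in> Kset" "z \<in> Kset" shows "od_map F z \<in> Kset"
proof -
  have "F (P0 z) \<in> Kset" "F (P1 z) \<in> Kset" using assms P0_K P1_K by auto
  then show ?thesis unfolding od_map_def by (blast intro: Kset_add P0_K P1_K)
qed
lemma ev_restr: "z \<in> Kset \<Longrightarrow> ev_map (restrict F Kset) z = ev_map F z"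
  by (simp add: ev_map_def P0_K P1_K)
lemma od_restr: "z \<in> Kset \<Longrightarrow> od_map (restrict F Kset) z = od_map F z"
  by (simp add: od_map_def P0_K P1_K)

lemma sbr_restr: fixes F G :: "'z jel \<Rightarrow> 'z jel" assumes F: "\<And>z. z \<in> Kset \<Longrightarrow> F z \<in> Kset" and G: "\<And>z. z \<in> Kset \<Longrightarrow> G z \<in> Kset"
  and z: "z \<in> Kset"
  shows "sbr (restrict F Kset) (restrict G Kset) z = sbr F G z"
proof -
  have a: "ev_map F z \<in> Kset" "od_map F z \<in> Kset" "ev_map G z \<in> Kset" "od_map G z \<in> Kset"
    using ev_K[OF F z] od_K[OF F z] ev_K[OF G z] od_K[OF G z] by auto
  show ?thesis unfolding sbr_def using a z by (simp add: ev_restr od_restr)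
qed

lemma dJK: "good D h \<Longrightarrow> z \<in> Kset \<Longrightarrow> dJ0 D h z + dJ1 c z \<in> Kset"
  using dJ0_K dJ1_K Kset_add by blast

lemma PhiStar_br: assumes d1: "D \<in> DerJ_deg \<iota> \<delta> (False, False)" and d2: "E \<in> DerJ_deg \<iota> \<delta> (False, False)"
  shows "PhiStar \<iota> \<delta> s (sbr D E) = restrict (sbr (PhiStar \<iota> \<delta> s D) (PhiStar \<iota> \<delta> s E)) Kset"
proof -
  obtain Dz1 h1 c1 where g1: "good Dz1 h1" and D1: "D = (\<lambda>a. dJ0 Dz1 h1 a + dJ1 c1 a)" using DerJ_char[OF d1] by blast
  obtain Dz2 h2 c2 where g2: "good Dz2 h2" and D2: "E = (\<lambda>a. dJ0 Dz2 h2 a + dJ1 c2 a)" using DerJ_char[OF d2] by blast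
  have p: "- (\<iota> s * (Dz1 c2 - h1 * c2 - (Dz2 c1 - h2 * c1))) =
    Dz1 (- (\<iota> s * c2)) - h1 * (- (\<iota> s * c2)) - (Dz2 (- (\<iota> s * c1)) - h2 * (- (\<iota> s * c1)))"
    by (simp add: goodD[OF g1] goodD[OF g2] good_const[OF g1] good_const[OF g2] algebra_simps)
  show ?thesis unfolding D1 D2 sbr_dJ[OF g1 g2] PhiStar_form[OF good_br[OF g1 g2]] PhiStar_form[OF g1] PhiStar_form[OF g2]
  proof (rule restrict_ext)
    fix z :: "'z jel" assume z: "z \<in> Kset"
    show "dJ0 (\<lambda>x. Dz1 (Dz2 x) - Dz2 (Dz1 x)) (Dz1 h2 - Dz2 h1) z + dJ1 (- (\<iota> s * (Dz1 c2 - h1 * c2 - (Dz2 c1 - h2 * c1)))) z =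
      sbr (restrict (\<lambda>z. dJ0 Dz1 h1 z + dJ1 (- (\<iota> s * c1)) z) Kset) (restrict (\<lambda>z. dJ0 Dz2 h2 z + dJ1 (- (\<iota> s * c2)) z) Kset) z"
    proof -
      have ss: "sbr (restrict (\<lambda>z. dJ0 Dz1 h1 z + dJ1 (- (\<iota> s * c1)) z) Kset) (restrict (\<lambda>z. dJ0 Dz2 h2 z + dJ1 (- (\<iota> s * c2)) z) Kset) z
        = sbr (\<lambda>z. dJ0 Dz1 h1 z + dJ1 (- (\<iota> s * c1)) z) (\<lambda>z. dJ0 Dz2 h2 z + dJ1 (- (\<iota> s * c2)) z) z"
        by (rule sbr_restr[OF dJK[OF g1] dJK[OF g2] z])
      show ?thesis by (simp only: ss sbr_dJ[OF g1 g2] p)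
    qed
  qed
qed

lemma PhiStar_od: assumes d1: "D \<in> DerJ_deg \<iota> \<delta> (False, False)" and o: "\<forall>a. od_map D a = 0"
  shows "\<forall>z\<in>Kset. od_map (PhiStar \<iota> \<delta> s D) z = 0"
proof -
  obtain Dz1 h1 c1 where g1: "good Dz1 h1" and D1: "D = (\<lambda>a. dJ0 Dz1 h1 a + dJ1 c1 a)" using DerJ_char[OF d1] by blast
  have "dJ1 c1 (elem X0 1) One = 0" using o unfolding D1 od_dJ[OF g1] by simp
  then have c: "c1 = 0" by (simp add: dJ1_def)
  show ?thesis
  proof
    fix z :: "'z jel" assume z: "z \<in> Kset"
    have "od_map (PhiStar \<iota> \<delta> s D) z = dJ1 (- (\<iota> s * c1)) z"
      unfolding D1 PhiStar_form[OF g1] od_restr[OF z] od_dJ[OF g1] ..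
    then show "od_map (PhiStar \<iota> \<delta> s D) z = 0" using c by (intro ext) (simp add: dJ1_def split: basis.split)
  qed
qed

lemma PhiStar_ev: assumes d1: "D \<in> DerJ_deg \<iota> \<delta> (False, False)" and o: "\<forall>a. ev_map D a = 0"
  shows "\<forall>z\<in>Kset. ev_map (PhiStar \<iota> \<delta> s D) z = 0"
proof -
  obtain Dz1 h1 c1 where g1: "good Dz1 h1" and D1: "D = (\<lambda>a. dJ0 Dz1 h1 a + dJ1 c1 a)" using DerJ_char[OF d1] by blast
  have "dJ0 Dz1 h1 (elem One f) One = 0" for f using o unfolding D1 ev_dJ[OF g1] by simp
  then have z: "Dz1 f = 0" for f by (simp add: dJ0_def)
  have "dJ0 Dz1 h1 (elem X0 1) X0 = 0" using o unfolding D1 ev_dJ[OF g1] by simp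
  then have h: "h1 = 0" by (simp add: dJ0_def z)
  show ?thesis
  proof
    fix z :: "'z jel" assume zk: "z \<in> Kset"
    have "ev_map (PhiStar \<iota> \<delta> s D) z = dJ0 Dz1 h1 z"
      unfolding D1 PhiStar_form[OF g1] ev_restr[OF zk] ev_dJ[OF g1] ..
    then show "ev_map (PhiStar \<iota> \<delta> s D) z = 0" using z h by (intro ext) (simp add: dJ0_def split: basis.split)
  qed
qed

end


definition Pd :: "bool \<times> bool \<Rightarrow> 'z::zero jel \<Rightarrow> 'z jel" where "Pd \<beta> c = (\<lambda>b. if deg b = \<beta> then c b else 0)"
definition pr :: "('z::zero jel \<Rightarrow> 'z jel) \<Rightarrow> 'z jel \<Rightarrow> 'z jel" where "pr M = (\<lambda>c b. M (Pd (deg b) c) b)"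

context ck begin

definition Gm :: "'z \<Rightarrow> 'z \<Rightarrow> 'z jel \<Rightarrow> 'z jel" where
  "Gm v e = (\<lambda>a. dJ0 (\<lambda>f. - 2 * v * \<delta> f) (\<delta> v) a + dJ1 e a)"
definition eeFT :: "'z jel \<Rightarrow> 'z jel \<Rightarrow> 'z" where
  "eeFT a b = b X0 * \<delta> (a One) + a (W I1) * b (Xs I1) + a (W I2) * b (Xs I2) - a (W I3) * b (Xs I3)"
definition vv :: "bool \<Rightarrow> bool \<Rightarrow> 'z jel \<Rightarrow> 'z jel \<Rightarrow> 'z" where
  "vv p q a b = (if p \<and> q then a X0 * b X0 else 0)"
definition ee :: "bool \<Rightarrow> bool \<Rightarrow> 'z jel \<Rightarrow> 'z jel \<Rightarrow> 'z" where
  "ee p q a b = (if \<not> p \<and> q then eeFT a b else if p \<and> \<not> q then - eeFT b a else 0)"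

lemma L3: assumes a: "a \<in> Jpar p" and b: "b \<in> Jpar q"
  shows "pr (Dop \<delta> p q a b) = Gm (vv p q a b) (ee p q a b)"
proof (rule ext)
  fix c
  show "pr (Dop \<delta> p q a b) c = Gm (vv p q a b) (ee p q a b) c"
    using a
  proof (cases rule: JparE2)
    case 1 note a1 = this
    show ?thesis using b
    proof (cases rule: JparE2)
      case 1 then show ?thesis using a1
        by (intro jel_eqI) (simp_all add: pr_def Pd_def Dop_def Gm_def vv_def ee_def eeFT_def dJ0_def dJ1_def zmul_def algebra_simps)
    next
      case 2 then show ?thesis using a1
        by (intro jel_eqI) (simp_all add: pr_def Pd_def Dop_def Gm_def vv_def ee_def eeFT_def dJ0_def dJ1_def zmul_def algebra_simps)
    qed
  next
    case 2 note a1 = this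
    show ?thesis using b
    proof (cases rule: JparE2)
      case 1 then show ?thesis using a1
        by (intro jel_eqI) (simp_all add: pr_def Pd_def Dop_def Gm_def vv_def ee_def eeFT_def dJ0_def dJ1_def zmul_def algebra_simps)
    next
      case 2 then show ?thesis using a1
        by (intro jel_eqI) (simp_all add: pr_def Pd_def Dop_def Gm_def vv_def ee_def eeFT_def dJ0_def dJ1_def zmul_def algebra_simps)
    qed
  qed
qed

lemma sum_app: "(\<Sum>i\<in>A. f i) x = (\<Sum>i\<in>A. f i x)"
  by (induction A rule: infinite_finite_induct) auto

lemma dsum: "\<delta> (\<Sum>i<(n::nat). f i) = (\<Sum>i<n. \<delta> (f i))"
  by (induction n) simp_all

lemma good_Gm: "good (\<lambda>f. - 2 * v * \<delta> f) (\<delta> v)"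
  unfolding good_def by (simp add: algebra_simps)

lemma Gm0: "Gm 0 0 = (\<lambda>x. 0)"
  by (intro ext jel_eqI) (simp_all add: Gm_def dJ0_def dJ1_def)

lemma Gm_add: "(\<lambda>x. Gm v e x + Gm v' e' x) = Gm (v + v') (e + e')"
  by (intro ext jel_eqI) (simp_all add: Gm_def dJ0_def dJ1_def algebra_simps)

lemma Gm_sum: "(\<lambda>x. \<Sum>i<(n::nat). scal \<iota> (c i) (Gm (v i) (e i) x)) = Gm (\<Sum>i<n. \<iota> (c i) * v i) (\<Sum>i<n. \<iota> (c i) * e i)"
proof (induction n)
  case 0 then show ?case by (simp add: Gm0 zero_fun_def)
next
  case (Suc n)
  have "(\<lambda>x. \<Sum>i<Suc n. scal \<iota> (c i) (Gm (v i) (e i) x))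
     = (\<lambda>x. (\<Sum>i<n. scal \<iota> (c i) (Gm (v i) (e i) x)) + scal \<iota> (c n) (Gm (v n) (e n) x))" by simp
  also have "\<dots> = (\<lambda>x. Gm (\<Sum>i<n. \<iota> (c i) * v i) (\<Sum>i<n. \<iota> (c i) * e i) x + scal \<iota> (c n) (Gm (v n) (e n) x))"
    using Suc by (metis (no_types, lifting))
  also have "\<dots> = Gm (\<Sum>i<Suc n. \<iota> (c i) * v i) (\<Sum>i<Suc n. \<iota> (c i) * e i)"
    by (intro ext jel_eqI) (simp_all add: Gm_def dJ0_def dJ1_def scal_def algebra_simps)
  finally show ?case .
qed

lemma jm_addR: "jmult \<delta> a (x + y) = jmult \<delta> a x + jmult \<delta> a y"
  by (intro jel_eqI) (simp_all add: algebra_simps)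

lemma Dop_add: "Dop \<delta> p q a b (x + y) = Dop \<delta> p q a b x + Dop \<delta> p q a b y"
  unfolding Dop_def by (intro ext) (simp add: jm_addR zmul_def algebra_simps)

lemma D_pr: fixes D :: "'z jel \<Rightarrow> 'z jel" assumes add: "\<And>x y. D (x + y) = D x + D y" and dm: "deg_map (False, False) D"
  shows "pr D = D"
proof (intro ext)
  fix x :: "'z jel" and b
  have split: "x = Pd (False, False) x + Pd (True, False) x + Pd (False, True) x + Pd (True, True) x"
    by (intro jel_eqI) (simp_all add: Pd_def)
  have z: "D (Pd \<beta> x) b' = 0" if "deg b' \<noteq> \<beta>" for \<beta> b'
  proof -
    have "Pd \<beta> x \<in> Jdeg \<beta>" by (simp add: Pd_def Jdeg_def)
    moreover have "gadd (False, False) \<beta> = \<beta>" by (cases \<beta>) (simp add: gadd_def)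
    ultimately have "D (Pd \<beta> x) \<in> Jdeg \<beta>" using dm unfolding deg_map_def by metis
    then show ?thesis using that Jdeg_E by blast
  qed
  have "D x = D (Pd (False, False) x + Pd (True, False) x + Pd (False, True) x + Pd (True, True) x)"
    by (rule arg_cong[where f=D], rule split)
  then have "D x b = D (Pd (False, False) x) b + D (Pd (True, False) x) b + D (Pd (False, True) x) b + D (Pd (True, True) x) b"
    by (simp only: add plus_fun_apply)
  moreover obtain p1 p2 where d: "deg b = (p1, p2)" by (cases "deg b")
  ultimately show "pr D x b = D x b" unfolding pr_def
    by (cases p1; cases p2; simp add: z d)
qed

lemma pr_sum: "pr (\<lambda>x. \<Sum>i<n. scal \<iota> (c i) (M i x)) = (\<lambda>x. \<Sum>i<n. scal \<iota> (c i) (pr (M i) x))"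
  by (intro ext) (simp add: pr_def sum_app scal_def)

end

context ck begin

lemma Dop_FT: "Dop \<delta> False True (elem One g) (elem X0 f) = Gm 0 (f * \<delta> g)"
  by (intro ext jel_eqI) (simp_all add: Dop_def Gm_def dJ0_def dJ1_def zmul_def algebra_simps)
lemma Dop_TT: "Dop \<delta> True True (elem X0 v) (elem X0 1) = Gm v 0"
  by (intro ext jel_eqI) (simp_all add: Dop_def Gm_def dJ0_def dJ1_def zmul_def algebra_simps)

lemma scal1: "scal \<iota> 1 x = x" by (simp add: scal_def)

lemma Gm_span: "\<exists>n c Ds. Gm v e = (\<lambda>a. \<Sum>i<(n::nat). scal \<iota> (c i) (Ds i a)) \<and>
   (\<forall>i<n. \<exists>g f. Ds i = Dop \<delta> False True (elem One g) (elem X0 f)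
     \<or> Ds i = Dop \<delta> True True (elem X0 f) (elem X0 1))"
proof -
  obtain n c fs gs where e: "e = (\<Sum>i<(n::nat). \<iota> (c i) * fs i * \<delta> (gs i))" using span by blast
  define Ds where "Ds i = (if i < n then Dop \<delta> False True (elem One (gs i)) (elem X0 (fs i)) else Dop \<delta> True True (elem X0 v) (elem X0 1))" for i
  define c' where "c' i = (if i < n then c i else 1)" for i
  have "(\<lambda>a. \<Sum>i<Suc n. scal \<iota> (c' i) (Ds i a)) = (\<lambda>a. (\<Sum>i<n. scal \<iota> (c i) (Gm 0 (fs i * \<delta> (gs i)) a)) + Gm v 0 a)"
    by (intro ext) (simp add: Ds_def c'_def Dop_FT Dop_TT scal1)
  also have "\<dots> = (\<lambda>a. Gm (\<Sum>i<n. \<iota> (c i) * 0) (\<Sum>i<n. \<iota> (c i) * (fs i * \<delta> (gs i))) a + Gm v 0 a)"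
    by (simp only: Gm_sum[where n=n and c=c and v="\<lambda>i. 0" and e="\<lambda>i. fs i * \<delta> (gs i)", symmetric])
  also have "\<dots> = Gm v e"
    unfolding e by (simp add: Gm_add mult.assoc)
  finally have "Gm v e = (\<lambda>a. \<Sum>i<Suc n. scal \<iota> (c' i) (Ds i a))" ..
  moreover have "\<forall>i<Suc n. \<exists>g f. Ds i = Dop \<delta> False True (elem One g) (elem X0 f)
     \<or> Ds i = Dop \<delta> True True (elem X0 f) (elem X0 1)" unfolding Ds_def by auto
  ultimately show ?thesis by blast
qed

lemma InderJ00_sub: assumes "D \<in> InderJ_deg \<iota> \<delta> (False, False)" shows "\<exists>v e. D = Gm v e"
proof -
  from assms obtain n c Ds where D: "D = restrict (\<lambda>a. \<Sum>i<(n::nat). scal \<iota> (c i) (Ds i a)) UNIV"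
    and Ds: "\<forall>i<n. Ds i \<in> {Dop \<delta> p q a b | p q a b. a \<in> Jpar p \<and> b \<in> Jpar q}"
    and dm: "deg_map (False, False) D"
    unfolding InderJ_deg_def InderJ_def Fspan_def by blast
  have "\<forall>i\<in>{..<n}. \<exists>t. Ds i = Dop \<delta> (fst t) (fst (snd t)) (fst (snd (snd t))) (snd (snd (snd t)))
      \<and> fst (snd (snd t)) \<in> Jpar (fst t) \<and> snd (snd (snd t)) \<in> Jpar (fst (snd t))"
    using Ds by fastforce
  then obtain T where T: "\<forall>i\<in>{..<n}. Ds i = Dop \<delta> (fst (T i)) (fst (snd (T i))) (fst (snd (snd (T i)))) (snd (snd (snd (T i))))
      \<and> fst (snd (snd (T i))) \<in> Jpar (fst (T i)) \<and> snd (snd (snd (T i))) \<in> Jpar (fst (snd (T i)))"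
    by (rule bchoice[THEN exE]) blast
  define P where "P i = fst (T i)" for i
  define Q where "Q i = fst (snd (T i))" for i
  define A where "A i = fst (snd (snd (T i)))" for i
  define B where "B i = snd (snd (snd (T i)))" for i
  have T': "\<And>i. i < n \<Longrightarrow> Ds i = Dop \<delta> (P i) (Q i) (A i) (B i) \<and> A i \<in> Jpar (P i) \<and> B i \<in> Jpar (Q i)"
    using T unfolding P_def Q_def A_def B_def by blast
  have D': "D = (\<lambda>a. \<Sum>i<n. scal \<iota> (c i) (Dop \<delta> (P i) (Q i) (A i) (B i) a))"
    unfolding D restrict_UNIV' using T' by (intro ext sum.cong) auto
  have add: "D (x + y) = D x + D y" for x y
    unfolding D' by (intro ext) (simp add: sum_app Dop_add scal_def sum.distrib distrib_left)
  have "D = pr D" using D_pr[OF add dm] by simp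
  also have "\<dots> = (\<lambda>x. \<Sum>i<n. scal \<iota> (c i) (pr (Dop \<delta> (P i) (Q i) (A i) (B i)) x))"
    unfolding D' pr_sum ..
  also have "\<dots> = (\<lambda>x. \<Sum>i<n. scal \<iota> (c i) (Gm (vv (P i) (Q i) (A i) (B i)) (ee (P i) (Q i) (A i) (B i)) x))"
    using T' L3 by (intro ext sum.cong) auto
  also have "\<dots> = Gm (\<Sum>i<n. \<iota> (c i) * vv (P i) (Q i) (A i) (B i)) (\<Sum>i<n. \<iota> (c i) * ee (P i) (Q i) (A i) (B i))"
    by (rule Gm_sum)
  finally show ?thesis by blast
qed

lemma Gm_InderJ: "Gm v e \<in> InderJ_deg \<iota> \<delta> (False, False)"
proof -
  obtain n c Ds where G: "Gm v e = (\<lambda>a. \<Sum>i<(n::nat). scal \<iota> (c i) (Ds i a))"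
    and Ds: "\<forall>i<n. \<exists>g f. Ds i = Dop \<delta> False True (elem One g) (elem X0 f) \<or> Ds i = Dop \<delta> True True (elem X0 f) (elem X0 1)"
    using Gm_span by blast
  have j: "elem One g \<in> Jpar False" "elem X0 f \<in> Jpar True" for g f :: 'z
    using elem_Jpar[of One g] elem_Jpar[of X0 f] by simp_all
  have "\<forall>i<n. Ds i \<in> {Dop \<delta> p q a b | p q a b. a \<in> Jpar p \<and> b \<in> Jpar q}"
    using Ds j by blast
  then have "Gm v e \<in> InderJ \<iota> \<delta>" unfolding InderJ_def Fspan_def G
    by (intro CollectI exI[of _ n] exI[of _ c] exI[of _ Ds]) (simp add: restrict_UNIV')
  moreover have "deg_map (False, False) (Gm v e)" unfolding Gm_def by (rule dJ_deg[OF good_Gm])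
  ultimately show ?thesis unfolding InderJ_deg_def by simp
qed

lemma L3K: assumes a: "a \<in> Kset" "a \<in> Jpar p" and b: "b \<in> Kset" "b \<in> Jpar q" and z: "z \<in> Kset"
  shows "Dop \<delta> p q a b z = Gm (vv p q a b) (ee p q a b) z"
proof -
  have ka: "a (W i) = 0" "a (Xs i) = 0" and kb: "b (W i) = 0" "b (Xs i) = 0" and kz: "z (W i) = 0" "z (Xs i) = 0" for i
    using a b z Kset_E by blast+
  show ?thesis using a(2)
  proof (cases rule: JparE2)
    case 1 note a1 = this
    show ?thesis using b(2)
    proof (cases rule: JparE2)
      case 1 then show ?thesis using a1
        by (intro jel_eqI) (simp_all add: ka kb kz Dop_def Gm_def vv_def ee_def eeFT_def dJ0_def dJ1_def zmul_def algebra_simps)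
    next
      case 2 then show ?thesis using a1
        by (intro jel_eqI) (simp_all add: ka kb kz Dop_def Gm_def vv_def ee_def eeFT_def dJ0_def dJ1_def zmul_def algebra_simps)
    qed
  next
    case 2 note a1 = this
    show ?thesis using b(2)
    proof (cases rule: JparE2)
      case 1 then show ?thesis using a1
        by (intro jel_eqI) (simp_all add: ka kb kz Dop_def Gm_def vv_def ee_def eeFT_def dJ0_def dJ1_def zmul_def algebra_simps)
    next
      case 2 then show ?thesis using a1
        by (intro jel_eqI) (simp_all add: ka kb kz Dop_def Gm_def vv_def ee_def eeFT_def dJ0_def dJ1_def zmul_def algebra_simps)
    qed
  qed
qed

lemma InderK_sub: assumes "x \<in> InderK \<iota> \<delta>" shows "\<exists>v e. x = restrict (Gm v e) Kset"
proof -
  from assms obtain n c Ds where x: "x = restrict (\<lambda>a. \<Sum>i<(n::nat). scal \<iota> (c i) (Ds i a)) Kset"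
    and Ds: "\<forall>i<n. Ds i \<in> {restrict (Dop \<delta> p q a b) Kset | p q a b. a \<in> Kset \<inter> Jpar p \<and> b \<in> Kset \<inter> Jpar q}"
    unfolding InderK_def Fspan_def by blast
  have "\<forall>i\<in>{..<n}. \<exists>t. Ds i = restrict (Dop \<delta> (fst t) (fst (snd t)) (fst (snd (snd t))) (snd (snd (snd t)))) Kset
      \<and> fst (snd (snd t)) \<in> Kset \<inter> Jpar (fst t) \<and> snd (snd (snd t)) \<in> Kset \<inter> Jpar (fst (snd t))"
    using Ds by fastforce
  then obtain T where T: "\<forall>i\<in>{..<n}. Ds i = restrict (Dop \<delta> (fst (T i)) (fst (snd (T i))) (fst (snd (snd (T i)))) (snd (snd (snd (T i))))) Kset
      \<and> fst (snd (snd (T i))) \<in> Kset \<inter> Jpar (fst (T i)) \<and> snd (snd (snd (T i))) \<in> Kset \<inter> Jpar (fst (snd (T i)))"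
    by (rule bchoice[THEN exE]) blast
  define P where "P i = fst (T i)" for i
  define Q where "Q i = fst (snd (T i))" for i
  define A where "A i = fst (snd (snd (T i)))" for i
  define B where "B i = snd (snd (snd (T i)))" for i
  have T': "\<And>i. i < n \<Longrightarrow> Ds i = restrict (Dop \<delta> (P i) (Q i) (A i) (B i)) Kset \<and> A i \<in> Kset \<and> A i \<in> Jpar (P i)
     \<and> B i \<in> Kset \<and> B i \<in> Jpar (Q i)"
    using T unfolding P_def Q_def A_def B_def by blast
  have "x = restrict (\<lambda>a. \<Sum>i<n. scal \<iota> (c i) (Gm (vv (P i) (Q i) (A i) (B i)) (ee (P i) (Q i) (A i) (B i)) a)) Kset"
    unfolding x
  proof (rule restrict_ext)
    fix z :: "'z jel" assume z: "z \<in> Kset"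
    show "(\<Sum>i<n. scal \<iota> (c i) (Ds i z)) = (\<Sum>i<n. scal \<iota> (c i) (Gm (vv (P i) (Q i) (A i) (B i)) (ee (P i) (Q i) (A i) (B i)) z))"
    proof (rule sum.cong)
      fix i assume "i \<in> {..<n}"
      then have "Ds i = restrict (Dop \<delta> (P i) (Q i) (A i) (B i)) Kset" "A i \<in> Kset" "A i \<in> Jpar (P i)" "B i \<in> Kset" "B i \<in> Jpar (Q i)"
        using T' by auto
      then show "scal \<iota> (c i) (Ds i z) = scal \<iota> (c i) (Gm (vv (P i) (Q i) (A i) (B i)) (ee (P i) (Q i) (A i) (B i)) z)"
        using L3K z by simp
    qed simp
  qed
  also have "\<dots> = restrict (Gm (\<Sum>i<n. \<iota> (c i) * vv (P i) (Q i) (A i) (B i)) (\<Sum>i<n. \<iota> (c i) * ee (P i) (Q i) (A i) (B i))) Kset"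
    by (simp only: Gm_sum)
  finally show ?thesis by blast
qed

lemma Gm_InderK: "restrict (Gm v e) Kset \<in> InderK \<iota> \<delta>"
proof -
  obtain n c Ds where G: "Gm v e = (\<lambda>a. \<Sum>i<(n::nat). scal \<iota> (c i) (Ds i a))"
    and Ds: "\<forall>i<n. \<exists>g f. Ds i = Dop \<delta> False True (elem One g) (elem X0 f) \<or> Ds i = Dop \<delta> True True (elem X0 f) (elem X0 1)"
    using Gm_span by blast
  have j: "elem One g \<in> Kset \<inter> Jpar False" "elem X0 f \<in> Kset \<inter> Jpar True" for g f :: 'z
    using elem_Jpar[of One g] elem_Jpar[of X0 f] elem_K by simp_all
  have "\<forall>i<n. restrict (Ds i) Kset \<in> {restrict (Dop \<delta> p q a b) Kset | p q a b. a \<in> Kset \<inter> Jpar p \<and> b \<in> Kset \<inter> Jpar q}"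
  proof (intro allI impI)
    fix i assume "i < n"
    then obtain g f where "Ds i = Dop \<delta> False True (elem One g) (elem X0 f) \<or> Ds i = Dop \<delta> True True (elem X0 f) (elem X0 1)"
      using Ds by blast
    then show "restrict (Ds i) Kset \<in> {restrict (Dop \<delta> p q a b) Kset | p q a b. a \<in> Kset \<inter> Jpar p \<and> b \<in> Kset \<inter> Jpar q}"
    proof (elim disjE)
      assume "Ds i = Dop \<delta> False True (elem One g) (elem X0 f)"
      then show ?thesis
        using j by fastforce
    next
      assume "Ds i = Dop \<delta> True True (elem X0 f) (elem X0 1)"
      then show ?thesis
        using j by fastforce
    qed
  qed
  moreover have "restrict (Gm v e) Kset = restrict (\<lambda>a. \<Sum>i<n. scal \<iota> (c i) (restrict (Ds i) Kset a)) Kset"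
    unfolding G by (rule restrict_ext) simp
  ultimately show ?thesis unfolding InderK_def Fspan_def
    by (intro CollectI exI[of _ n] exI[of _ c] exI[of _ "\<lambda>i. restrict (Ds i) Kset"]) simp
qed

lemma PhiStar_Gm: "PhiStar \<iota> \<delta> s (Gm v e) = restrict (Gm v (- (\<iota> s * e))) Kset"
  unfolding Gm_def by (rule PhiStar_form[OF good_Gm])

lemma PhiStar_Inder: "PhiStar \<iota> \<delta> s ` InderJ_deg \<iota> \<delta> (False, False) = InderK \<iota> \<delta>"
proof
  show "PhiStar \<iota> \<delta> s ` InderJ_deg \<iota> \<delta> (False, False) \<subseteq> InderK \<iota> \<delta>"
  proof
    fix x assume "x \<in> PhiStar \<iota> \<delta> s ` InderJ_deg \<iota> \<delta> (False, False)"
    then obtain D where D: "D \<in> InderJ_deg \<iota> \<delta> (False, False)" and x: "x = PhiStar \<iota> \<delta> s D" by blast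
    obtain v e where "D = Gm v e" using InderJ00_sub[OF D] by blast
    then show "x \<in> InderK \<iota> \<delta>" unfolding x by (simp add: PhiStar_Gm Gm_InderK)
  qed
next
  show "InderK \<iota> \<delta> \<subseteq> PhiStar \<iota> \<delta> s ` InderJ_deg \<iota> \<delta> (False, False)"
  proof
    fix x assume "x \<in> InderK \<iota> \<delta>"
    then obtain v e where x: "x = restrict (Gm v e) Kset" using InderK_sub by blast
    have "x = PhiStar \<iota> \<delta> s (Gm v (\<iota> s * e))" unfolding x PhiStar_Gm by simp
    then show "x \<in> PhiStar \<iota> \<delta> s ` InderJ_deg \<iota> \<delta> (False, False)" using Gm_InderJ by blast
  qed
qed

end

theorem proposition6p2:
  fixes \<iota> :: "'f::field \<Rightarrow> 'z::comm_ring_1" and \<delta> :: "'z \<Rightarrow> 'z" and s :: 'f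
  assumes char: "(2::'f) \<noteq> 0"
    and hom1: "\<iota> 1 = 1"
    and hom_add: "\<forall>a b. \<iota> (a + b) = \<iota> a + \<iota> b"
    and hom_mult: "\<forall>a b. \<iota> (a * b) = \<iota> a * \<iota> b"
    and der_add: "\<forall>f g. \<delta> (f + g) = \<delta> f + \<delta> g"
    and der_lin: "\<forall>c f. \<delta> (\<iota> c * f) = \<iota> c * \<delta> f"
    and der_mult: "\<forall>f g. \<delta> (f * g) = \<delta> f * g + f * \<delta> g"
    and span: "\<forall>z. \<exists>(n::nat) c fs gs. z = (\<Sum>i<n. \<iota> (c i) * fs i * \<delta> (gs i))"
    and sqrt: "s * s = -1"
  shows "Phi \<iota> \<delta> s ` Kset \<subseteq> DerJ_deg \<iota> \<delta> (True, True)
    \<and> inj_on (Phi \<iota> \<delta> s) Kset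
    \<and> (\<forall>D\<in>DerJ_deg \<iota> \<delta> (False, False). \<forall>z\<in>Kset. sbr D (Phi \<iota> \<delta> s z) \<in> Phi \<iota> \<delta> s ` Kset)
    \<and> (\<forall>D\<in>DerJ_deg \<iota> \<delta> (False, False). PhiStar \<iota> \<delta> s D \<in> Der_on \<iota> \<delta> Kset)
    \<and> bij_betw (PhiStar \<iota> \<delta> s) (DerJ_deg \<iota> \<delta> (False, False)) (DerbarK \<iota> \<delta>)
    \<and> (\<forall>D\<in>DerJ_deg \<iota> \<delta> (False, False). \<forall>E\<in>DerJ_deg \<iota> \<delta> (False, False).
          PhiStar \<iota> \<delta> s (\<lambda>a. D a + E a)
            = restrict (\<lambda>z. PhiStar \<iota> \<delta> s D z + PhiStar \<iota> \<delta> s E z) Kset)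
    \<and> (\<forall>k. \<forall>D\<in>DerJ_deg \<iota> \<delta> (False, False).
          PhiStar \<iota> \<delta> s (\<lambda>a. scal \<iota> k (D a)) = restrict (\<lambda>z. scal \<iota> k (PhiStar \<iota> \<delta> s D z)) Kset)
    \<and> (\<forall>D\<in>DerJ_deg \<iota> \<delta> (False, False). \<forall>E\<in>DerJ_deg \<iota> \<delta> (False, False).
          PhiStar \<iota> \<delta> s (sbr D E) = restrict (sbr (PhiStar \<iota> \<delta> s D) (PhiStar \<iota> \<delta> s E)) Kset)
    \<and> (\<forall>D\<in>DerJ_deg \<iota> \<delta> (False, False).
          (\<forall>a. od_map D a = 0) \<longrightarrow> (\<forall>z\<in>Kset. od_map (PhiStar \<iota> \<delta> s D) z = 0))
    \<and> (\<forall>D\<in>DerJ_deg \<iota> \<delta> (False, False).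
          (\<forall>a. ev_map D a = 0) \<longrightarrow> (\<forall>z\<in>Kset. ev_map (PhiStar \<iota> \<delta> s D) z = 0))
    \<and> PhiStar \<iota> \<delta> s ` InderJ_deg \<iota> \<delta> (False, False) = InderK \<iota> \<delta>"
proof -
  interpret ck \<iota> \<delta> s
    by (rule ck.intro[OF char hom1 hom_add hom_mult der_add der_lin der_mult span sqrt])
  show ?thesis
  proof (intro conjI)
    show "Phi \<iota> \<delta> s ` Kset \<subseteq> DerJ_deg \<iota> \<delta> (True, True)" using Phi_Der by blast
    show "inj_on (Phi \<iota> \<delta> s) Kset" by (rule Phi_inj)
    show "\<forall>D\<in>DerJ_deg \<iota> \<delta> (False, False). \<forall>z\<in>Kset. sbr D (Phi \<iota> \<delta> s z) \<in> Phi \<iota> \<delta> s ` Kset"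
      using sbr_in by blast
    show "\<forall>D\<in>DerJ_deg \<iota> \<delta> (False, False). PhiStar \<iota> \<delta> s D \<in> Der_on \<iota> \<delta> Kset"
      using PhiStar_Der by blast
    show "bij_betw (PhiStar \<iota> \<delta> s) (DerJ_deg \<iota> \<delta> (False, False)) (DerbarK \<iota> \<delta>)"
      unfolding bij_betw_def using PhiStar_inj PhiStar_img by blast
    show "\<forall>D\<in>DerJ_deg \<iota> \<delta> (False, False). \<forall>E\<in>DerJ_deg \<iota> \<delta> (False, False).
          PhiStar \<iota> \<delta> s (\<lambda>a. D a + E a)
            = restrict (\<lambda>z. PhiStar \<iota> \<delta> s D z + PhiStar \<iota> \<delta> s E z) Kset"
      using PhiStar_add by blast
    show "\<forall>k. \<forall>D\<in>DerJ_deg \<iota> \<delta> (False, False).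
          PhiStar \<iota> \<delta> s (\<lambda>a. scal \<iota> k (D a)) = restrict (\<lambda>z. scal \<iota> k (PhiStar \<iota> \<delta> s D z)) Kset"
      using PhiStar_scal by blast
    show "\<forall>D\<in>DerJ_deg \<iota> \<delta> (False, False). \<forall>E\<in>DerJ_deg \<iota> \<delta> (False, False).
          PhiStar \<iota> \<delta> s (sbr D E) = restrict (sbr (PhiStar \<iota> \<delta> s D) (PhiStar \<iota> \<delta> s E)) Kset"
      using PhiStar_br by blast
    show "\<forall>D\<in>DerJ_deg \<iota> \<delta> (False, False).
          (\<forall>a. od_map D a = 0) \<longrightarrow> (\<forall>z\<in>Kset. od_map (PhiStar \<iota> \<delta> s D) z = 0)"
      using PhiStar_od by blast
    show "\<forall>D\<in>DerJ_deg \<iota> \<delta> (False, False).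
          (\<forall>a. ev_map D a = 0) \<longrightarrow> (\<forall>z\<in>Kset. ev_map (PhiStar \<iota> \<delta> s D) z = 0)"
      using PhiStar_ev by blast
    show "PhiStar \<iota> \<delta> s ` InderJ_deg \<iota> \<delta> (False, False) = InderK \<iota> \<delta>"
      by (rule PhiStar_Inder)
  qed
qed

end
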